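(* Let $P$ and $P'$ be programs over a propositional signature $\Sigma$ and $q\in\Sigma$. If $P$ and $P'$ are strongly equivalent, then $f_{SP}(P,q)$ and $f_{SP}(P',q)$ are strongly equivalent.
   Context: A program over $\Sigma$ is a finite set of rules $r$ of the form $a_1\vee\dots\vee a_k\leftarrow b_1,\dots,b_l,\ not\,c_1,\dots,not\,c_m,\ not\,not\,d_1,\dots,not\,not\,d_n$ with atoms in $\Sigma$; write $H(r)=\{a_i\}$, $B^+(r)=\{b_i\}$, $B^-(r)=\{c_i\}$, $B^{--}(r)=\{d_i\}$, $B(r)=B^+(r)\cup\{not\,c: c\in B^-(r)\}\cup\{not\,not\,d:d\in B^{--}(r)\}$ (elements of $B(r)$ are literals); a rule is written $H(r)\leftarrow B(r)$. $\Sigma(r)$, $\Sigma(P)$ are the atoms occurring in $r$, $P$. Reduct: $P^I=\{H(r)\leftarrow B^+(r): r\in P, B^-(r)\cap I=\emptyset, B^{--}(r)\subseteq I\}$. $I$ classically satisfies $r$ if $B^+(r)\subseteq I$, $B^-(r)\cap I=\emptyset$, $B^{--}(r)\subseteq I$ imply $H(r)\cap I\ne\emptyset$. An HT-interpretation $\langle X,Y\rangle$ ($X\subseteq Y$) is an HT-model of $P$ if $Y$ classically satisfies all rules of $P$ and $X$ all rules of $P^Y$. $Y$ is an answer set of $P$ if $\langle Y,Y\rangle$ is an HT-model and no $\langle X,Y\rangle$ with $X\subsetneq Y$ is; $AS(P)$ is the set of answer sets. $P_1,P_2$ are strongly equivalent if $AS(P_1\cup R)=AS(P_2\cup R)$ for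 every program $R$. Normal form: $r$ is tautological if $H(r)\cap B^+(r)\ne\emptyset$ or $B^+(r)\cap B^-(r)\ne\emptyset$ or $B^-(r)\cap B^{--}(r)\ne\emptyset$; $r\in P$ is minimal in $P$ if no $r'\in P$ has ($H(r')\subseteq H(r)$ and $B(r')\subsetneq B(r)$) or ($H(r')\subsetneq H(r)$ and $B(r')\subseteq B(r)$). $NF(P)$ is obtained by: 1. removing tautological rules; 2. removing from $B^{--}(r)$ atoms in $B^+(r)$; 3. removing from $H(r)$ atoms in $B^-(r)$; 4. removing rules not minimal in the resulting program. Notation: for a set $S$ of literals, $not\,(S)=\{not\,s:s\in S\}$, $not\,not\,(S)=\{not\,not\,s:s\in S\}$, simplifying $not\,not\,not\,p=not\,p$ and $not\,not\,not\,not\,p=not\,not\,p$. $B^{\setminus q}(r)=B(r)\setminus\{q,not\,q,not\,not\,q\}$, $H^{\setminus q}(r)=H(r)\setminus\{q\}$. For a set of rules $Q$, $D_q(Q)$ is the set of all sets $not\,(\{l_1,\dots,l_m\})\cup not\,not\,(\{l_{m+1},\dots,l_n\})$ where $\langle\{r_1,\dots,r_m\},\{r_{m+1},\dots,r_n\}\rangle$ is a partition of $Q$ (parts possibly empty), $l_i\in B^{\setminus q}(r_i)$ for $i\le m$, $l_j\in H^{\setminus q}(r_j)$ for $j>m$ (so $D_q(\emptyset)=\{\emptyset\}$). The operator $f_{SP}$: let $P'=NF(P)$, $R=\{r\in P': q\notin\Sigma(r)\}$, $R_0=\{r\in P':q\in B(r)\}$, $R_1=\{r\in P': not\,q\in B(r)\}$,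 $R_2=\{r\in P': not\,not\,q\in B(r), q\notin H(r)\}$, $R_3=\{r\in P': not\,not\,q\in B(r), q\in H(r)\}$, $R_4=\{r\in P': not\,not\,q\notin B(r), q\in H(r)\}$. $P''$ consists of: every $r\in R$; and (1a) for $r_0\in R_0$, $r_4\in R_4$: $H(r_0)\cup H^{\setminus q}(r_4)\leftarrow B^{\setminus q}(r_0)\cup B(r_4)$; (2a) for $r_0\in R_0$, $r_3\in R_3$, $r'\in R_1\cup R_4$: $H(r_0)\cup H^{\setminus q}(r_3)\leftarrow B^{\setminus q}(r_0)\cup B^{\setminus q}(r_3)\cup not\,(H^{\setminus q}(r'))\cup not\,not\,(B^{\setminus q}(r'))$; (3a) for $r_0\in R_0$, $r_3\in R_3$, $h\in H(r_0)$, $D\in D_q((R_0\cup R_2)\setminus\{r_0\})$: $H(r_0)\leftarrow B^{\setminus q}(r_0)\cup\{not\,not\,h\}\cup D\cup B^{\setminus q}(r_3)\cup not\,(H^{\setminus q}(r_3))$; (1b) for $r_2\in R_2$, $r_4\in R_4$: $H(r_2)\leftarrow B^{\setminus q}(r_2)\cup not\,(H^{\setminus q}(r_4))\cup not\,not\,(B(r_4))$; (2b) for $r_2\in R_2$, $r_3\in R_3$, $r'\in R_1\cup R_4$: $H(r_2)\leftarrow B^{\setminus q}(r_2)\cup not\,(H^{\setminus q}(r_3)\cup H^{\setminus q}(r'))\cup not\,not\,(B^{\setminus q}(r_3)\cup B^{\setminus q}(r'))$; (3b) for $r_2\in R_2$, $r_3\in R_3$, $h\in H(r_2)$, $D\in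 D_q((R_0\cup R_2)\setminus\{r_2\})$: $H(r_2)\leftarrow B^{\setminus q}(r_2)\cup not\,(H^{\setminus q}(r_3))\cup not\,not\,(B^{\setminus q}(r_3)\cup\{h\})\cup D$; (4) for $r'\in R_1\cup R_4$, $D\in D_q(R_3\cup R_4)$ with $D\cap not\,(B^{\setminus q}(r'))=\emptyset$: $H^{\setminus q}(r')\leftarrow B^{\setminus q}(r')\cup D$; (5) for $r'\in R_1\cup R_4$, $r_3\in R_3$, $r\in R_0\cup R_2$, $D\in D_q(R_4)$ with $D\cap not\,(B^{\setminus q}(r'))=\emptyset$: $H^{\setminus q}(r')\leftarrow B^{\setminus q}(r')\cup not\,(H(r)\cup H^{\setminus q}(r_3))\cup not\,not\,(B^{\setminus q}(r)\cup B^{\setminus q}(r_3))\cup D$; (6) for $r'\in R_1\cup R_4$, $r_3\in R_3$, $h\in H^{\setminus q}(r')$, $D\in D_q((R_1\cup R_4)\setminus\{r'\})$: $H^{\setminus q}(r')\leftarrow B^{\setminus q}(r')\cup not\,(H^{\setminus q}(r_3))\cup not\,not\,(B^{\setminus q}(r_3)\cup\{h\})\cup D$; (7) for $r_0\in R_0$, $r_3,r_3'\in R_3$ with $r_3\ne r_3'$, $D\in D_q((R_0\cup R_2)\setminus\{r_0\})$, $h\in H(r_0)$: $H(r_0)\cup H^{\setminus q}(r_3)\leftarrow B^{\setminus q}(r_0)\cup B^{\setminus q}(r_3)\cup not\,(H^{\setminus q}(r_3'))\cup not\,not\,(B^{\setminus q}(r_3')\cup\{h\})\cup D$. Then $f_{SP}(P,q)=NF(P'')$.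 *)

theory Defs
  imports Main
begin

datatype 'a lit = LPos 'a | LNot 'a | LNotNot 'a

text \<open>A rule is represented as the pair (H(r), B(r)) of its head (a set of atoms)
  and its body (a set of literals); the atom type 'a plays the role of the signature.\<close>
type_synonym 'a rule = "'a set \<times> 'a lit set"

definition H :: "'a rule \<Rightarrow> 'a set" where "H r = fst r"
definition B :: "'a rule \<Rightarrow> 'a lit set" where "B r = snd r"
definition Bpos :: "'a rule \<Rightarrow> 'a set" where "Bpos r = {a. LPos a \<in> B r}"
definition Bneg :: "'a rule \<Rightarrow> 'a set" where "Bneg r = {a. LNot a \<in> B r}"
definition Bnn :: "'a rule \<Rightarrow> 'a set" where "Bnn r = {a. LNotNot a \<in> B r}"

definition is_program :: "'a rule set \<Rightarrow> bool" where
  "is_program P \<longleftrightarrow> finite P \<and> (\<forall>r\<in>P. finite (H r) \<and> finite (B r))"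

definition csat :: "'a set \<Rightarrow> 'a rule \<Rightarrow> bool" where
  "csat I r \<longleftrightarrow> (Bpos r \<subseteq> I \<and> Bneg r \<inter> I = {} \<and> Bnn r \<subseteq> I \<longrightarrow> H r \<inter> I \<noteq> {})"

definition reduct :: "'a rule set \<Rightarrow> 'a set \<Rightarrow> 'a rule set" where
  "reduct P I = {(H r, LPos ` Bpos r) | r. r \<in> P \<and> Bneg r \<inter> I = {} \<and> Bnn r \<subseteq> I}"

definition ht_model :: "'a set \<Rightarrow> 'a set \<Rightarrow> 'a rule set \<Rightarrow> bool" where
  "ht_model X Y P \<longleftrightarrow> X \<subseteq> Y \<and> (\<forall>r\<in>P. csat Y r) \<and> (\<forall>r\<in>reduct P Y. csat X r)"

definition answer_set :: "'a rule set \<Rightarrow> 'a set \<Rightarrow> bool" where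
  "answer_set P Y \<longleftrightarrow> ht_model Y Y P \<and> \<not> (\<exists>X. X \<subset> Y \<and> ht_model X Y P)"

definition AS :: "'a rule set \<Rightarrow> 'a set set" where
  "AS P = {Y. answer_set P Y}"

definition strongly_equivalent :: "'a rule set \<Rightarrow> 'a rule set \<Rightarrow> bool" where
  "strongly_equivalent P1 P2 \<longleftrightarrow> (\<forall>R. is_program R \<longrightarrow> AS (P1 \<union> R) = AS (P2 \<union> R))"

definition tautological :: "'a rule \<Rightarrow> bool" where
  "tautological r \<longleftrightarrow> H r \<inter> Bpos r \<noteq> {} \<or> Bpos r \<inter> Bneg r \<noteq> {} \<or> Bneg r \<inter> Bnn r \<noteq> {}"

definition minimal_in :: "'a rule \<Rightarrow> 'a rule set \<Rightarrow> bool" where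
  "minimal_in r P \<longleftrightarrow> \<not> (\<exists>r'\<in>P. (H r' \<subseteq> H r \<and> B r' \<subset> B r) \<or> (H r' \<subset> H r \<and> B r' \<subseteq> B r))"

text \<open>Steps 2 and 3 of the normal form (removing from B--(r) atoms of B+(r), and
  from H(r) atoms of B-(r)).\<close>
definition nf_simp :: "'a rule \<Rightarrow> 'a rule" where
  "nf_simp r = (H r - Bneg r, B r - LNotNot ` Bpos r)"

definition NF :: "'a rule set \<Rightarrow> 'a rule set" where
  "NF P = (let P1 = nf_simp ` {r \<in> P. \<not> tautological r} in {r \<in> P1. minimal_in r P1})"

text \<open>not(l) and not not(l) on literals, with not not not p = not p and
  not not not not p = not not p.\<close>
fun lnot :: "'a lit \<Rightarrow> 'a lit" where
  "lnot (LPos a) = LNot a"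
| "lnot (LNot a) = LNotNot a"
| "lnot (LNotNot a) = LNot a"

fun lnn :: "'a lit \<Rightarrow> 'a lit" where
  "lnn (LPos a) = LNotNot a"
| "lnn (LNot a) = LNot a"
| "lnn (LNotNot a) = LNotNot a"

definition Bq :: "'a \<Rightarrow> 'a rule \<Rightarrow> 'a lit set" where
  "Bq q r = B r - {LPos q, LNot q, LNotNot q}"

definition Hq :: "'a \<Rightarrow> 'a rule \<Rightarrow> 'a set" where
  "Hq q r = H r - {q}"

definition atoms_rule :: "'a rule \<Rightarrow> 'a set" where
  "atoms_rule r = H r \<union> Bpos r \<union> Bneg r \<union> Bnn r"

definition Dq :: "'a \<Rightarrow> 'a rule set \<Rightarrow> 'a lit set set" where
  "Dq q Q = {lnot ` (l1 ` Q1) \<union> LNotNot ` (l2 ` Q2) | Q1 Q2 l1 l2.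
      Q1 \<union> Q2 = Q \<and> Q1 \<inter> Q2 = {} \<and>
      (\<forall>r\<in>Q1. l1 r \<in> Bq q r) \<and> (\<forall>r\<in>Q2. l2 r \<in> Hq q r)}"

definition fSP :: "'a rule set \<Rightarrow> 'a \<Rightarrow> 'a rule set" where
  "fSP P q = (let
     P' = NF P;
     R  = {r \<in> P'. q \<notin> atoms_rule r};
     R0 = {r \<in> P'. LPos q \<in> B r};
     R1 = {r \<in> P'. LNot q \<in> B r};
     R2 = {r \<in> P'. LNotNot q \<in> B r \<and> q \<notin> H r};
     R3 = {r \<in> P'. LNotNot q \<in> B r \<and> q \<in> H r};
     R4 = {r \<in> P'. LNotNot q \<notin> B r \<and> q \<in> H r};
     S1a = {(H r0 \<union> Hq q r4, Bq q r0 \<union> B r4) | r0 r4. r0 \<in> R0 \<and> r4 \<in> R4};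
     S2a = {(H r0 \<union> Hq q r3,
              Bq q r0 \<union> Bq q r3 \<union> LNot ` Hq q r' \<union> lnn ` Bq q r')
            | r0 r3 r'. r0 \<in> R0 \<and> r3 \<in> R3 \<and> r' \<in> R1 \<union> R4};
     S3a = {(H r0, Bq q r0 \<union> {LNotNot h} \<union> D \<union> Bq q r3 \<union> LNot ` Hq q r3)
            | r0 r3 h D. r0 \<in> R0 \<and> r3 \<in> R3 \<and> h \<in> H r0 \<and> D \<in> Dq q ((R0 \<union> R2) - {r0})};
     S1b = {(H r2, Bq q r2 \<union> LNot ` Hq q r4 \<union> lnn ` B r4) | r2 r4. r2 \<in> R2 \<and> r4 \<in> R4};
     S2b = {(H r2, Bq q r2 \<union> LNot ` (Hq q r3 \<union> Hq q r') \<union> lnn ` (Bq q r3 \<union> Bq q r'))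
            | r2 r3 r'. r2 \<in> R2 \<and> r3 \<in> R3 \<and> r' \<in> R1 \<union> R4};
     S3b = {(H r2, Bq q r2 \<union> LNot ` Hq q r3 \<union> lnn ` (Bq q r3 \<union> {LPos h}) \<union> D)
            | r2 r3 h D. r2 \<in> R2 \<and> r3 \<in> R3 \<and> h \<in> H r2 \<and> D \<in> Dq q ((R0 \<union> R2) - {r2})};
     S4 = {(Hq q r', Bq q r' \<union> D)
            | r' D. r' \<in> R1 \<union> R4 \<and> D \<in> Dq q (R3 \<union> R4) \<and> D \<inter> lnot ` Bq q r' = {}};
     S5 = {(Hq q r', Bq q r' \<union> LNot ` (H r \<union> Hq q r3) \<union> lnn ` (Bq q r \<union> Bq q r3) \<union> D)
            | r' r3 r D. r' \<in> R1 \<union> R4 \<and> r3 \<in> R3 \<and> r \<in> R0 \<union> R2 \<and> D \<in> Dq q R4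
                 \<and> D \<inter> lnot ` Bq q r' = {}};
     S6 = {(Hq q r', Bq q r' \<union> LNot ` Hq q r3 \<union> lnn ` (Bq q r3 \<union> {LPos h}) \<union> D)
            | r' r3 h D. r' \<in> R1 \<union> R4 \<and> r3 \<in> R3 \<and> h \<in> Hq q r'
                 \<and> D \<in> Dq q ((R1 \<union> R4) - {r'})};
     S7 = {(H r0 \<union> Hq q r3,
              Bq q r0 \<union> Bq q r3 \<union> LNot ` Hq q r3' \<union> lnn ` (Bq q r3' \<union> {LPos h}) \<union> D)
            | r0 r3 r3' D h. r0 \<in> R0 \<and> r3 \<in> R3 \<and> r3' \<in> R3 \<and> r3 \<noteq> r3'
                 \<and> D \<in> Dq q ((R0 \<union> R2) - {r0}) \<and> h \<in> H r0};
     P'' = R \<union> S1a \<union> S2a \<union> S3a \<union> S1b \<union> S2b \<union> S3b \<union> S4 \<union> S5 \<union> S6 \<union> S7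
   in NF P'')"

end

theory Submission
  imports Defs "HOL-Library.Product_Order"
begin


definition tY :: "'a set \<Rightarrow> 'a lit \<Rightarrow> bool" where
  "tY Y l = (case l of LPos a \<Rightarrow> a \<in> Y | LNot a \<Rightarrow> a \<notin> Y | LNotNot a \<Rightarrow> a \<in> Y)"
definition tX :: "'a set \<Rightarrow> 'a set \<Rightarrow> 'a lit \<Rightarrow> bool" where
  "tX X Y l = (case l of LPos a \<Rightarrow> a \<in> X | LNot a \<Rightarrow> a \<notin> Y | LNotNot a \<Rightarrow> a \<in> Y)"
definition rsat :: "'a set \<Rightarrow> 'a set \<Rightarrow> 'a rule \<Rightarrow> bool" where
  "rsat X Y r = (((\<forall>l\<in>B r. tY Y l) \<longrightarrow> H r \<inter> Y \<noteq> {}) \<and> ((\<forall>l\<in>B r. tX X Y l) \<longrightarrow> H r \<inter> X \<noteq> {}))"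

lemma tY_simps[simp]: "tY Y (LPos a) = (a \<in> Y)" "tY Y (LNot a) = (a \<notin> Y)" "tY Y (LNotNot a) = (a \<in> Y)"
  by (simp_all add: tY_def)
lemma tX_simps[simp]: "tX X Y (LPos a) = (a \<in> X)" "tX X Y (LNot a) = (a \<notin> Y)" "tX X Y (LNotNot a) = (a \<in> Y)"
  by (simp_all add: tX_def)

lemma ballY: "(\<forall>l\<in>S. tY Y l) \<longleftrightarrow> {a. LPos a \<in> S} \<subseteq> Y \<and> {a. LNot a \<in> S} \<inter> Y = {} \<and> {a. LNotNot a \<in> S} \<subseteq> Y"
  apply (auto)
  apply (case_tac l; auto)
  done
lemma ballX: "(\<forall>l\<in>S. tX X Y l) \<longleftrightarrow> {a. LPos a \<in> S} \<subseteq> X \<and> {a. LNot a \<in> S} \<inter> Y = {} \<and> {a. LNotNot a \<in> S} \<subseteq> Y"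
  apply (auto)
  apply (case_tac l; auto)
  done

lemma ballX': "(\<forall>l\<in>B r. tX X Y l) \<longleftrightarrow> Bpos r \<subseteq> X \<and> Bneg r \<inter> Y = {} \<and> Bnn r \<subseteq> Y"
  unfolding ballX Bpos_def Bneg_def Bnn_def ..
lemma ballY': "(\<forall>l\<in>B r. tY Y l) \<longleftrightarrow> Bpos r \<subseteq> Y \<and> Bneg r \<inter> Y = {} \<and> Bnn r \<subseteq> Y"
  unfolding ballY Bpos_def Bneg_def Bnn_def ..

lemma csat_iff: "csat Y r = ((\<forall>l\<in>B r. tY Y l) \<longrightarrow> H r \<inter> Y \<noteq> {})"
  unfolding csat_def ballY Bpos_def Bneg_def Bnn_def by simp

lemma csat_red: "csat X (H r, LPos ` Bpos r) \<longleftrightarrow> (Bpos r \<subseteq> X \<longrightarrow> H r \<inter> X \<noteq> {})"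
  unfolding csat_def by (auto simp: Bpos_def Bneg_def Bnn_def B_def H_def)

lemma ht_model_iff: "ht_model X Y P \<longleftrightarrow> X \<subseteq> Y \<and> (\<forall>r\<in>P. rsat X Y r)"
proof -
  have red: "(\<forall>r'\<in>reduct P Y. csat X r') \<longleftrightarrow>
     (\<forall>r\<in>P. (\<forall>l\<in>B r. tX X Y l) \<longrightarrow> H r \<inter> X \<noteq> {})"
  proof -
    have "(\<forall>r'\<in>reduct P Y. csat X r') \<longleftrightarrow> (\<forall>r\<in>P. Bneg r \<inter> Y = {} \<and> Bnn r \<subseteq> Y \<longrightarrow> csat X (H r, LPos ` Bpos r))"
    proof
      assume a: "\<forall>r'\<in>reduct P Y. csat X r'"
      show "\<forall>r\<in>P. Bneg r \<inter> Y = {} \<and> Bnn r \<subseteq> Y \<longrightarrow> csat X (H r, LPos ` Bpos r)"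
      proof (intro ballI impI)
        fix r assume "r \<in> P" "Bneg r \<inter> Y = {} \<and> Bnn r \<subseteq> Y"
        then have "(H r, LPos ` Bpos r) \<in> reduct P Y" unfolding reduct_def by blast
        then show "csat X (H r, LPos ` Bpos r)" using a by blast
      qed
    next
      assume a: "\<forall>r\<in>P. Bneg r \<inter> Y = {} \<and> Bnn r \<subseteq> Y \<longrightarrow> csat X (H r, LPos ` Bpos r)"
      show "\<forall>r'\<in>reduct P Y. csat X r'"
      proof
        fix r' assume "r' \<in> reduct P Y"
        then obtain r where "r' = (H r, LPos ` Bpos r)" "r \<in> P" "Bneg r \<inter> Y = {} \<and> Bnn r \<subseteq> Y"
          unfolding reduct_def by blast
        then show "csat X r'" using a by blast
      qed
    qed
    also have "\<dots> \<longleftrightarrow> (\<forall>r\<in>P. (\<forall>l\<in>B r. tX X Y l) \<longrightarrow> H r \<inter> X \<noteq> {})"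
      unfolding csat_red ballX' by blast
    finally show ?thesis .
  qed
  show ?thesis unfolding ht_model_def red rsat_def csat_iff by blast
qed

lemma tX_tY: "X \<subseteq> Y \<Longrightarrow> tX X Y l \<Longrightarrow> tY Y l"
  by (cases l) auto

lemma rsat_mono: "X \<subseteq> Y \<Longrightarrow> H r' \<subseteq> H r \<Longrightarrow> B r' \<subseteq> B r \<Longrightarrow> rsat X Y r' \<Longrightarrow> rsat X Y r"
  unfolding rsat_def by blast

lemma taut_rsat: "X \<subseteq> Y \<Longrightarrow> tautological r \<Longrightarrow> rsat X Y r"
proof -
  assume XY: "X \<subseteq> Y" and t: "tautological r"
  show ?thesis
  proof (cases "H r \<inter> Bpos r \<noteq> {}")
    case True
    then obtain a where "a \<in> H r" "a \<in> Bpos r" by auto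
    then show ?thesis unfolding rsat_def ballX' ballY' by auto
  next
    case F1: False
    show ?thesis
    proof (cases "Bpos r \<inter> Bneg r \<noteq> {}")
      case True
      then obtain a where "a \<in> Bpos r" "a \<in> Bneg r" by auto
      then show ?thesis unfolding rsat_def ballX' ballY' using XY by auto
    next
      case False
      then have "Bneg r \<inter> Bnn r \<noteq> {}" using F1 t unfolding tautological_def by simp
      then obtain a where "a \<in> Bnn r" "a \<in> Bneg r" by auto
      then show ?thesis unfolding rsat_def ballX' ballY' by auto
    qed
  qed
qed

lemma B_nf: "B (nf_simp r) = B r - LNotNot ` Bpos r" and H_nf: "H (nf_simp r) = H r - Bneg r"
  unfolding nf_simp_def B_def H_def by simp_all

lemma nf_simp_rsat: "X \<subseteq> Y \<Longrightarrow> rsat X Y (nf_simp r) \<longleftrightarrow> rsat X Y r"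
proof -
  assume XY: "X \<subseteq> Y"
  have bY: "(\<forall>l\<in>B (nf_simp r). tY Y l) \<longleftrightarrow> (\<forall>l\<in>B r. tY Y l)"
  proof
    assume a: "\<forall>l\<in>B (nf_simp r). tY Y l"
    show "\<forall>l\<in>B r. tY Y l"
    proof
      fix l assume l: "l \<in> B r"
      show "tY Y l"
      proof (cases "l \<in> LNotNot ` Bpos r")
        case True
        then obtain c where c: "l = LNotNot c" "LPos c \<in> B r" unfolding Bpos_def by auto
        then have "LPos c \<in> B (nf_simp r)" unfolding B_nf by auto
        then show ?thesis using a c by fastforce
      next
        case False then show ?thesis using a l unfolding B_nf by blast
      qed
    qed
  qed (auto simp: B_nf)
  have bX: "(\<forall>l\<in>B (nf_simp r). tX X Y l) \<longleftrightarrow> (\<forall>l\<in>B r. tX X Y l)"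
  proof
    assume a: "\<forall>l\<in>B (nf_simp r). tX X Y l"
    show "\<forall>l\<in>B r. tX X Y l"
    proof
      fix l assume l: "l \<in> B r"
      show "tX X Y l"
      proof (cases "l \<in> LNotNot ` Bpos r")
        case True
        then obtain c where c: "l = LNotNot c" "LPos c \<in> B r" unfolding Bpos_def by auto
        then have "LPos c \<in> B (nf_simp r)" unfolding B_nf by auto
        then show ?thesis using a c XY by fastforce
      next
        case False then show ?thesis using a l unfolding B_nf by blast
      qed
    qed
  qed (auto simp: B_nf)
  have hY: "(\<forall>l\<in>B r. tY Y l) \<Longrightarrow> H (nf_simp r) \<inter> Y = H r \<inter> Y"
    unfolding H_nf ballY' by blast
  have hX: "(\<forall>l\<in>B r. tX X Y l) \<Longrightarrow> H (nf_simp r) \<inter> X = H r \<inter> X"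
    unfolding H_nf ballX' using XY by blast
  have e1: "((\<forall>l\<in>B r. tY Y l) \<longrightarrow> H (nf_simp r) \<inter> Y \<noteq> {}) \<longleftrightarrow> ((\<forall>l\<in>B r. tY Y l) \<longrightarrow> H r \<inter> Y \<noteq> {})"
    by (cases "\<forall>l\<in>B r. tY Y l") (simp_all only: hY simp_thms)
  have e2: "((\<forall>l\<in>B r. tX X Y l) \<longrightarrow> H (nf_simp r) \<inter> X \<noteq> {}) \<longleftrightarrow> ((\<forall>l\<in>B r. tX X Y l) \<longrightarrow> H r \<inter> X \<noteq> {})"
    by (cases "\<forall>l\<in>B r. tX X Y l") (simp_all only: hX simp_thms)
  show ?thesis unfolding rsat_def bY bX e1 e2 ..
qed

lemma rule_le: "(r' :: 'a rule) \<le> r \<longleftrightarrow> H r' \<subseteq> H r \<and> B r' \<subseteq> B r"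
  by (simp add: less_eq_prod_def H_def B_def)

lemma minimal_in_iff: "minimal_in r P \<longleftrightarrow> \<not> (\<exists>r'\<in>P. r' < r)"
  unfolding minimal_in_def less_le_not_le rule_le by blast

lemma NF_ht:
  assumes fin: "finite P"
  shows "ht_model X Y (NF P) \<longleftrightarrow> ht_model X Y P"
proof -
  define P1 where "P1 = nf_simp ` {r \<in> P. \<not> tautological r}"
  have NFe: "NF P = {r \<in> P1. minimal_in r P1}" unfolding NF_def P1_def Let_def by simp
  have f1: "finite P1" unfolding P1_def using fin by simp
  show ?thesis
  proof (cases "X \<subseteq> Y")
    case False then show ?thesis by (simp add: ht_model_iff)
  next
    case XY: True
    have "(\<forall>r\<in>NF P. rsat X Y r) \<longleftrightarrow> (\<forall>r\<in>P. rsat X Y r)"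
    proof
      assume a: "\<forall>r\<in>NF P. rsat X Y r"
      show "\<forall>r\<in>P. rsat X Y r"
      proof
        fix r assume r: "r \<in> P"
        show "rsat X Y r"
        proof (cases "tautological r")
          case True then show ?thesis using taut_rsat XY by blast
        next
          case False
          then have "nf_simp r \<in> P1" unfolding P1_def using r by blast
          then obtain m where m: "m \<in> P1" "m \<le> nf_simp r" "\<forall>b\<in>P1. b \<le> m \<longrightarrow> m = b"
            using finite_has_minimal2[OF f1] by blast
          have "minimal_in m P1" unfolding minimal_in_iff using m(3) less_le_not_le by blast
          then have "m \<in> NF P" using NFe m(1) by blast
          then have "rsat X Y m" using a by blast
          then have "rsat X Y (nf_simp r)" using rsat_mono[OF XY] m(2) unfolding rule_le by metis
          then show ?thesis using nf_simp_rsat XY by blast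
        qed
      qed
    next
      assume a: "\<forall>r\<in>P. rsat X Y r"
      show "\<forall>r\<in>NF P. rsat X Y r"
        using a nf_simp_rsat[OF XY] unfolding NFe P1_def by blast
    qed
    then show ?thesis unfolding ht_model_iff using XY by blast
  qed
qed


lemma ht_union: "ht_model X Y (P \<union> R) \<longleftrightarrow> ht_model X Y P \<and> ht_model X Y R"
  unfolding ht_model_iff by blast

lemma ht_eq_SE:
  assumes "\<And>X Y. ht_model X Y P1 \<longleftrightarrow> ht_model X Y P2"
  shows "strongly_equivalent P1 P2"
  unfolding strongly_equivalent_def AS_def answer_set_def ht_union assms by simp

lemma ht_YY: "ht_model X Y P \<Longrightarrow> ht_model Y Y P"
proof -
  have e: "\<And>l. tX Y Y l = tY Y l" by (case_tac l) auto
  assume "ht_model X Y P"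
  then show ?thesis unfolding ht_model_iff rsat_def e by blast
qed

definition latom :: "'a lit \<Rightarrow> 'a" where
  "latom l = (case l of LPos a \<Rightarrow> a | LNot a \<Rightarrow> a | LNotNot a \<Rightarrow> a)"

lemma latom_simps[simp]: "latom (LPos a) = a" "latom (LNot a) = a" "latom (LNotNot a) = a"
  by (simp_all add: latom_def)

lemma latom_in: "l \<in> B r \<Longrightarrow> latom l \<in> atoms_rule r"
  unfolding atoms_rule_def Bpos_def Bneg_def Bnn_def latom_def by (cases l) auto

lemma tY_loc: "latom l \<in> A \<Longrightarrow> tY (Y \<inter> A) l = tY Y l"
  unfolding latom_def by (cases l) auto
lemma tX_loc: "latom l \<in> A \<Longrightarrow> tX (X \<inter> A) (Y \<inter> A) l = tX X Y l"
  unfolding latom_def by (cases l) auto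

lemma rsat_loc:
  assumes "atoms_rule r \<subseteq> A"
  shows "rsat (X \<inter> A) (Y \<inter> A) r \<longleftrightarrow> rsat X Y r"
proof -
  have 1: "(\<forall>l\<in>B r. tY (Y \<inter> A) l) = (\<forall>l\<in>B r. tY Y l)"
    using tY_loc latom_in assms by blast
  have 2: "(\<forall>l\<in>B r. tX (X \<inter> A) (Y \<inter> A) l) = (\<forall>l\<in>B r. tX X Y l)"
    using tX_loc latom_in assms by blast
  have 3: "H r \<subseteq> A" using assms unfolding atoms_rule_def by blast
  have 4: "H r \<inter> (Y \<inter> A) = H r \<inter> Y" "H r \<inter> (X \<inter> A) = H r \<inter> X" using 3 by blast+
  show ?thesis unfolding rsat_def 1 2 4 ..
qed

definition atP :: "'a rule set \<Rightarrow> 'a set" where "atP P = \<Union> (atoms_rule ` P)"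

lemma ht_loc:
  assumes "atP P \<subseteq> A" "X \<subseteq> Y"
  shows "ht_model (X \<inter> A) (Y \<inter> A) P \<longleftrightarrow> ht_model X Y P"
proof -
  have "\<forall>r\<in>P. atoms_rule r \<subseteq> A" using assms(1) unfolding atP_def by blast
  then have e: "\<And>r. r \<in> P \<Longrightarrow> rsat (X \<inter> A) (Y \<inter> A) r = rsat X Y r"
  proof -
    fix r assume "r \<in> P"
    with \<open>\<forall>r\<in>P. atoms_rule r \<subseteq> A\<close> have "atoms_rule r \<subseteq> A" by blast
    then show "rsat (X \<inter> A) (Y \<inter> A) r = rsat X Y r" by (rule rsat_loc)
  qed
  have "X \<inter> A \<subseteq> Y \<inter> A" using assms(2) by blast
  then show ?thesis unfolding ht_model_iff using e assms(2) by auto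
qed

lemma finite_atP: "is_program P \<Longrightarrow> finite (atP P)"
proof -
  assume p: "is_program P"
  have "\<forall>r\<in>P. finite (atoms_rule r)"
  proof
    fix r assume r: "r \<in> P"
    then have "finite (H r)" "finite (B r)" using p unfolding is_program_def by auto
    moreover have "Bpos r \<subseteq> latom ` B r" "Bneg r \<subseteq> latom ` B r" "Bnn r \<subseteq> latom ` B r"
      unfolding Bpos_def Bneg_def Bnn_def
      by (auto intro: image_eqI[where f=latom, OF latom_simps(1)[symmetric]]
        image_eqI[where f=latom, OF latom_simps(2)[symmetric]] image_eqI[where f=latom, OF latom_simps(3)[symmetric]])
    ultimately show "finite (atoms_rule r)" unfolding atoms_rule_def
      by (meson finite_Un finite_imageI finite_subset)
  qed
  then show ?thesis using p unfolding atP_def is_program_def by auto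
qed

lemma ball_img: "(\<forall>x\<in>f`A. P x) = (\<forall>a\<in>A. P (f a))" by blast

lemma rsat_fact: "rsat X Y ({a}, {}) \<longleftrightarrow> a \<in> Y \<and> a \<in> X"
  unfolding rsat_def by (simp add: B_def H_def)
lemma rsat_imp: "rsat X Y ({a}, {LPos b}) \<longleftrightarrow> (b \<in> Y \<longrightarrow> a \<in> Y) \<and> (b \<in> X \<longrightarrow> a \<in> X)"
  unfolding rsat_def by (simp add: B_def H_def)

lemma SE_step1:
  assumes se: "strongly_equivalent P1 P2" and fY: "finite Y" and h: "ht_model Y Y P1"
  shows "ht_model Y Y P2"
proof -
  define R where "R = (\<lambda>a. ({a}, {} :: 'a lit set)) ` Y"
  have pR: "is_program R" unfolding R_def is_program_def using fY by (auto simp: H_def B_def)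
  have hR: "\<And>Z. ht_model Z Y R \<longleftrightarrow> Z = Y"
    unfolding ht_model_iff R_def by (auto simp: rsat_fact)
  have "answer_set (P1 \<union> R) Y" unfolding answer_set_def ht_union using h hR by auto
  then have "Y \<in> AS (P2 \<union> R)" using se pR unfolding strongly_equivalent_def AS_def by blast
  then show ?thesis unfolding AS_def answer_set_def ht_union by blast
qed

lemma SE_step2:
  assumes se: "strongly_equivalent P1 P2" and fY: "finite Y" and h: "ht_model X Y P1"
    and h2: "ht_model Y Y P2"
  shows "ht_model X Y P2"
proof (rule ccontr)
  assume nh: "\<not> ht_model X Y P2"
  have XY: "X \<subseteq> Y" using h unfolding ht_model_iff by blast
  define R where "R = (\<lambda>a. ({a}, {} :: 'a lit set)) ` X \<union> (\<lambda>(a,b). ({a}, {LPos b})) ` ((Y - X) \<times> (Y - X))"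
  have fX: "finite X" using XY fY finite_subset by blast
  have pR: "is_program R" unfolding R_def is_program_def using fY fX by (auto simp: H_def B_def)
  have hR: "ht_model Z Y R \<longleftrightarrow> Z \<subseteq> Y \<and> X \<subseteq> Z \<and> (\<forall>a\<in>Y-X. \<forall>b\<in>Y-X. b \<in> Z \<longrightarrow> a \<in> Z)" for Z
  proof -
    have "(\<forall>r\<in>R. rsat Z Y r) \<longleftrightarrow> (\<forall>a\<in>X. rsat Z Y ({a},{})) \<and> (\<forall>a\<in>Y-X. \<forall>b\<in>Y-X. rsat Z Y ({a},{LPos b}))"
      unfolding R_def ball_Un ball_img by auto
    then show ?thesis unfolding ht_model_iff rsat_fact rsat_imp using XY by auto
  qed
  have a2: "answer_set (P2 \<union> R) Y"
    unfolding answer_set_def ht_union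
  proof (intro conjI notI)
    show "ht_model Y Y P2" by (fact h2)
    show "ht_model Y Y R" using hR XY by blast
    assume "\<exists>Z. Z \<subset> Y \<and> ht_model Z Y P2 \<and> ht_model Z Y R"
    then obtain Z where Z: "Z \<subset> Y" "ht_model Z Y P2" "ht_model Z Y R" by blast
    have "Z = X"
    proof (rule ccontr)
      assume "Z \<noteq> X"
      then obtain b where b: "b \<in> Z" "b \<notin> X" using Z(3) hR by blast
      then have "b \<in> Y - X" using Z(1) by blast
      then have "Y - X \<subseteq> Z" using Z(3) hR b(1) by blast
      then show False using Z(1) Z(3) hR by blast
    qed
    then show False using Z(2) nh by blast
  qed
  then have "Y \<in> AS (P1 \<union> R)" using se pR unfolding strongly_equivalent_def AS_def by blast
  moreover have "ht_model X Y (P1 \<union> R)" unfolding ht_union using h hR XY by blast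
  moreover have "X \<subset> Y" using XY nh h2 by blast
  ultimately show False unfolding AS_def answer_set_def by blast
qed

lemma SE_ht:
  assumes se: "strongly_equivalent P1 P2" and p1: "is_program P1" and p2: "is_program P2"
  shows "ht_model X Y P1 \<longleftrightarrow> ht_model X Y P2"
proof -
  have se2: "strongly_equivalent P2 P1" using se unfolding strongly_equivalent_def by metis
  define A where "A = atP P1 \<union> atP P2"
  have fA: "finite A" unfolding A_def using finite_atP p1 p2 by blast
  have dir: "\<And>Q1 Q2. strongly_equivalent Q1 Q2 \<Longrightarrow> atP Q1 \<subseteq> A \<Longrightarrow> atP Q2 \<subseteq> A \<Longrightarrow>
     ht_model X Y Q1 \<Longrightarrow> ht_model X Y Q2"
  proof -
    fix Q1 Q2 assume s: "strongly_equivalent Q1 Q2" and a1: "atP Q1 \<subseteq> A" and a2: "atP Q2 \<subseteq> A"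
      and h: "ht_model X Y Q1"
    have XY: "X \<subseteq> Y" using h unfolding ht_model_iff by blast
    have h': "ht_model (X \<inter> A) (Y \<inter> A) Q1" using ht_loc[OF a1 XY] h by blast
    have fY: "finite (Y \<inter> A)" using fA by blast
    have "ht_model (Y \<inter> A) (Y \<inter> A) Q2" using SE_step1[OF s fY ht_YY[OF h']] .
    then have "ht_model (X \<inter> A) (Y \<inter> A) Q2" using SE_step2[OF s fY h'] by blast
    then show "ht_model X Y Q2" using ht_loc[OF a2 XY] by blast
  qed
  show ?thesis using dir[OF se] dir[OF se2] unfolding A_def by blast
qed


definition SS :: "('r \<Rightarrow> bool) \<Rightarrow> ('r \<Rightarrow> bool) \<Rightarrow> 'r set \<Rightarrow> bool" where
  "SS b h Q = (\<forall>r\<in>Q. b r \<longrightarrow> h r)"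

lemma SS_Un: "SS b h (A \<union> C) = (SS b h A \<and> SS b h C)" unfolding SS_def by blast
lemma SSD: "SS b h Q \<Longrightarrow> r \<in> Q \<Longrightarrow> b r \<Longrightarrow> h r" unfolding SS_def by blast
lemma SS_minus: "SS b h Q \<Longrightarrow> SS b h (Q - A)" unfolding SS_def by blast
lemma notSS: "\<not> SS b h Q \<Longrightarrow> \<exists>r\<in>Q. b r \<and> \<not> h r" unfolding SS_def by blast
lemma SS_ins: "SS b h (Q - {r}) \<Longrightarrow> (b r \<longrightarrow> h r) \<Longrightarrow> SS b h Q" unfolding SS_def by blast

locale core =
  fixes yb xb yh xh :: "'r \<Rightarrow> bool" and R R0 R1 R2 R3 R4 :: "'r set"
  assumes bxy: "\<And>r. xb r \<Longrightarrow> yb r" and hxy: "\<And>r. xh r \<Longrightarrow> yh r"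
begin

definition "T0 = SS yb yh (R \<union> R1 \<union> R4)"
definition "T1 = SS yb yh (R \<union> R0 \<union> R2)"
definition "NN = (T1 \<and> SS yb yh (R \<union> R2 \<union> R3 \<union> R4))"
definition "M00 = (T0 \<and> SS xb xh (R \<union> R1 \<union> R4))"
definition "M01 = (T1 \<and> SS xb xh (R \<union> R2 \<union> R3 \<union> R4))"
definition "M11 = (T1 \<and> SS xb xh (R \<union> R0 \<union> R2))"
definition "Phi = ((T0 \<or> (T1 \<and> \<not> NN)) \<and> (T0 \<longrightarrow> M00) \<and> (T1 \<and> \<not> NN \<longrightarrow> M01 \<or> M11))"

definition "cY r = (yb r \<and> \<not> yh r)"

definition "FR = (\<forall>r\<in>R. (yb r \<longrightarrow> yh r) \<and> (xb r \<longrightarrow> xh r))"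
definition "F1a = (\<forall>r0\<in>R0. \<forall>r4\<in>R4. (yb r0 \<and> yb r4 \<longrightarrow> yh r0 \<or> yh r4) \<and> (xb r0 \<and> xb r4 \<longrightarrow> xh r0 \<or> xh r4))"
definition "F2a = (\<forall>r0\<in>R0. \<forall>r3\<in>R3. \<forall>r'\<in>R1 \<union> R4.
   (yb r0 \<and> yb r3 \<and> cY r' \<longrightarrow> yh r0 \<or> yh r3) \<and> (xb r0 \<and> xb r3 \<and> cY r' \<longrightarrow> xh r0 \<or> xh r3))"
definition "F3a = (\<forall>r0\<in>R0. \<forall>r3\<in>R3. yh r0 \<and> SS yb yh ((R0 \<union> R2) - {r0}) \<and> \<not> yh r3 \<and> xb r0 \<and> xb r3 \<longrightarrow> xh r0)"
definition "F1b = (\<forall>r2\<in>R2. \<forall>r4\<in>R4. (yb r2 \<and> cY r4 \<longrightarrow> yh r2) \<and> (xb r2 \<and> cY r4 \<longrightarrow> xh r2))"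
definition "F2b = (\<forall>r2\<in>R2. \<forall>r3\<in>R3. \<forall>r'\<in>R1 \<union> R4.
   (yb r2 \<and> cY r3 \<and> cY r' \<longrightarrow> yh r2) \<and> (xb r2 \<and> cY r3 \<and> cY r' \<longrightarrow> xh r2))"
definition "F3b = (\<forall>r2\<in>R2. \<forall>r3\<in>R3. yh r2 \<and> cY r3 \<and> SS yb yh ((R0 \<union> R2) - {r2}) \<and> xb r2 \<longrightarrow> xh r2)"
definition "F4 = (\<forall>r'\<in>R1 \<union> R4. (SS yb yh (R3 \<union> R4) \<and> yb r' \<longrightarrow> yh r') \<and> (SS yb yh (R3 \<union> R4) \<and> xb r' \<longrightarrow> xh r'))"
definition "F5 = (\<forall>r'\<in>R1 \<union> R4. \<forall>r3\<in>R3. \<forall>r\<in>R0 \<union> R2.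
   (cY r \<and> cY r3 \<and> SS yb yh R4 \<and> yb r' \<longrightarrow> yh r') \<and> (cY r \<and> cY r3 \<and> SS yb yh R4 \<and> xb r' \<longrightarrow> xh r'))"
definition "F6 = (\<forall>r'\<in>R1 \<union> R4. \<forall>r3\<in>R3. yh r' \<and> cY r3 \<and> SS yb yh ((R1 \<union> R4) - {r'}) \<and> xb r' \<longrightarrow> xh r')"
definition "F7 = (\<forall>r0\<in>R0. \<forall>r3\<in>R3. \<forall>r3'\<in>R3. r3 \<noteq> r3' \<longrightarrow>
   (yh r0 \<and> cY r3' \<and> SS yb yh ((R0 \<union> R2) - {r0}) \<and> xb r0 \<and> xb r3 \<longrightarrow> xh r0 \<or> xh r3))"

lemma complete:
  assumes aR: FR and a1a: F1a and a2a: F2a and a3a: F3a and a1b: F1b and a3b: F3b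
    and a4: F4 and a5: F5 and a6: F6 and a7: F7
  shows Phi
proof -
  have fR: "r \<in> R \<Longrightarrow> (yb r \<longrightarrow> yh r) \<and> (xb r \<longrightarrow> xh r)" for r using aR unfolding FR_def by blast
  have I: "T0 \<or> (T1 \<and> \<not> NN)"
  proof (rule ccontr)
    assume "\<not> (T0 \<or> (T1 \<and> \<not> NN))"
    then have nT0: "\<not> T0" and c: "\<not> T1 \<or> NN" by auto
    from nT0 obtain ra where ra: "ra \<in> R \<union> R1 \<union> R4" "yb ra" "\<not> yh ra" unfolding T0_def SS_def by blast
    have raR: "ra \<in> R1 \<union> R4" using ra fR by blast
    have "\<not> SS yb yh (R3 \<union> R4)" using a4 raR ra unfolding F4_def by blast
    then obtain r34 where r34: "r34 \<in> R3 \<union> R4" "yb r34" "\<not> yh r34" unfolding SS_def by blast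
    have "\<not> NN" using r34 unfolding NN_def SS_def by blast
    then have "\<not> T1" using c by blast
    then obtain rb where rb: "rb \<in> R \<union> R0 \<union> R2" "yb rb" "\<not> yh rb" unfolding T1_def SS_def by blast
    have rbR: "rb \<in> R0 \<union> R2" using rb fR by blast
    show False
    proof (cases "\<exists>r4\<in>R4. cY r4")
      case True
      then obtain r4 where r4: "r4 \<in> R4" "cY r4" by blast
      show False
      proof (cases "rb \<in> R0")
        case True then show False using a1a r4 rb unfolding F1a_def cY_def by blast
      next
        case False then have "rb \<in> R2" using rbR by blast
        then show False using a1b r4 rb unfolding F1b_def cY_def by blast
      qed
    next
      case False
      then have s4: "SS yb yh R4" unfolding SS_def cY_def by blast
      have "r34 \<in> R3" using False r34 unfolding cY_def by blast
      then show False using a5 raR rbR rb ra r34 s4 unfolding F5_def cY_def by blast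
    qed
  qed
  have II: "T0 \<longrightarrow> M00"
  proof
    assume t0: T0
    show M00
    proof (rule ccontr)
      assume "\<not> M00"
      then obtain r where r: "r \<in> R \<union> R1 \<union> R4" "xb r" "\<not> xh r" unfolding M00_def SS_def using t0 by blast
      have rR: "r \<in> R1 \<union> R4" using r fR by blast
      have yhr: "yh r" using t0 r bxy unfolding T0_def SS_def by blast
      have "\<not> SS yb yh (R3 \<union> R4)" using a4 rR r unfolding F4_def by blast
      then obtain r34 where r34: "r34 \<in> R3 \<union> R4" "yb r34" "\<not> yh r34" unfolding SS_def by blast
      have "r34 \<in> R3" using r34 t0 unfolding T0_def SS_def by blast
      moreover have "SS yb yh ((R1 \<union> R4) - {r})" using t0 unfolding T0_def SS_def by blast
      ultimately show False using a6 rR r yhr r34 unfolding F6_def cY_def by blast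
    qed
  qed
  have III: "T1 \<and> \<not> NN \<longrightarrow> M01 \<or> M11"
  proof
    assume a: "T1 \<and> \<not> NN"
    show "M01 \<or> M11"
    proof (rule ccontr)
      assume b: "\<not> (M01 \<or> M11)"
      have t1: T1 using a by blast
      obtain r34 where r34: "r34 \<in> R \<union> R2 \<union> R3 \<union> R4" "yb r34" "\<not> yh r34"
        using a unfolding NN_def SS_def by blast
      have r34': "r34 \<in> R3 \<union> R4" using r34 t1 unfolding T1_def SS_def by blast
      obtain rx where rx: "rx \<in> R \<union> R2 \<union> R3 \<union> R4" "xb rx" "\<not> xh rx"
        using b t1 unfolding M01_def SS_def by blast
      obtain ry where ry: "ry \<in> R \<union> R0 \<union> R2" "xb ry" "\<not> xh ry"
        using b t1 unfolding M11_def SS_def by blast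
      have s02: "SS yb yh (R0 \<union> R2)" using t1 unfolding T1_def SS_def by blast
      have noR2: False if r2: "r2 \<in> R2" "xb r2" "\<not> xh r2" for r2
      proof (cases "\<exists>r4\<in>R4. cY r4")
        case True
        then obtain r4 where r4: "r4 \<in> R4" "cY r4" by blast
        then show False using a1b r2 unfolding F1b_def by blast
      next
        case False
        then have "r34 \<in> R3" using r34 r34' unfolding cY_def by blast
        moreover have "yh r2" using s02 r2 bxy unfolding SS_def by blast
        moreover have "SS yb yh ((R0 \<union> R2) - {r2})" using s02 by (rule SS_minus)
        ultimately show False using a3b r2 r34 unfolding F3b_def cY_def by blast
      qed
      have r0: "ry \<in> R0" using ry fR noR2 by blast
      have yh0: "yh ry" using s02 r0 ry bxy unfolding SS_def by blast
      have s0: "SS yb yh ((R0 \<union> R2) - {ry})" using s02 by (rule SS_minus)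
      have rx34: "rx \<in> R3 \<union> R4" using rx fR noR2 by blast
      show False
      proof (cases "rx \<in> R4")
        case True then show False using a1a r0 rx ry unfolding F1a_def by blast
      next
        case False
        then have rx3: "rx \<in> R3" using rx34 by blast
        show False
        proof (cases "\<exists>r4\<in>R4. cY r4")
          case True
          then obtain r4 where r4: "r4 \<in> R4" "cY r4" by blast
          have "\<not> (xb ry \<and> xb rx \<and> cY r4 \<longrightarrow> xh ry \<or> xh rx)" using rx ry r4 by blast
          moreover have "r4 \<in> R1 \<union> R4" using r4 by blast
          ultimately show False using a2a r0 rx3 r4 unfolding F2a_def by blast
        next
          case False
          then have r3: "r34 \<in> R3" using r34 r34' unfolding cY_def by blast
          show False
          proof (cases "r34 = rx")
            case True
            then show False using a3a r0 rx3 yh0 s0 rx ry r34 unfolding F3a_def by blast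
          next
            case False
            then have "rx \<noteq> r34" by simp
            then show False using a7 r0 rx3 r3 yh0 s0 rx ry r34 unfolding F7_def cY_def by blast
          qed
        qed
      qed
    qed
  qed
  show ?thesis unfolding Phi_def using I II III by blast
qed

lemma sound:
  assumes ph: Phi
  shows "FR \<and> F1a \<and> F2a \<and> F3a \<and> F1b \<and> F2b \<and> F3b \<and> F4 \<and> F5 \<and> F6 \<and> F7"
proof -
  have p1: "T0 \<Longrightarrow> SS xb xh (R \<union> R1 \<union> R4) \<and> SS yb yh (R \<union> R1 \<union> R4)"
    using ph unfolding Phi_def M00_def T0_def by blast
  have p2: "T1 \<Longrightarrow> \<not> NN \<Longrightarrow> M01 \<or> M11" using ph unfolding Phi_def by blast
  have p3: "\<not> T0 \<Longrightarrow> T1 \<and> \<not> NN" using ph unfolding Phi_def by blast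
  have p4: "\<not> T1 \<Longrightarrow> T0" using ph unfolding Phi_def by blast
  have m01: "M01 \<Longrightarrow> SS xb xh (R \<union> R2 \<union> R3 \<union> R4)" unfolding M01_def by blast
  have m11: "M11 \<Longrightarrow> SS xb xh (R \<union> R0 \<union> R2)" unfolding M11_def by blast
  have t1: "T1 \<Longrightarrow> SS yb yh (R \<union> R0 \<union> R2)" unfolding T1_def by blast
  have t0: "T0 \<longleftrightarrow> SS yb yh (R \<union> R1 \<union> R4)" unfolding T0_def by blast
  have nn: "\<not> NN \<Longrightarrow> T1 \<Longrightarrow> \<not> SS yb yh (R3 \<union> R4)" unfolding NN_def T1_def SS_def by blast
  have nnI: "r \<in> R3 \<union> R4 \<Longrightarrow> cY r \<Longrightarrow> \<not> NN" for r unfolding NN_def cY_def SS_def by blast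
  have cT0: "r \<in> R1 \<union> R4 \<Longrightarrow> cY r \<Longrightarrow> \<not> T0" for r unfolding T0_def cY_def SS_def by blast
  have cT1: "r \<in> R0 \<union> R2 \<Longrightarrow> cY r \<Longrightarrow> \<not> T1" for r unfolding T1_def cY_def SS_def by blast
  have getT1: "T1" if "r \<in> R0 \<union> R2" "yh r" "SS yb yh ((R0 \<union> R2) - {r})" for r
  proof -
    have "SS yb yh (R0 \<union> R2)" by (rule SS_ins[OF that(3)]) (simp add: that(2))
    moreover have "SS yb yh R"
    proof (cases T0)
      case True then show ?thesis using t0 unfolding SS_Un by blast
    next
      case False then show ?thesis using p3 t1 unfolding SS_Un by blast
    qed
    ultimately show T1 unfolding T1_def SS_Un by blast
  qed
  have fR: FR
    unfolding FR_def
  proof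
    fix r assume r: "r \<in> R"
    show "(yb r \<longrightarrow> yh r) \<and> (xb r \<longrightarrow> xh r)"
    proof (cases T0)
      case True then show ?thesis using p1 r unfolding SS_def by blast
    next
      case False then have "T1" "M01 \<or> M11" using p3 p2 by blast+
      then show ?thesis using t1 m01 m11 r unfolding SS_def by blast
    qed
  qed
  have f1a: F1a
    unfolding F1a_def
  proof (intro ballI)
    fix r0 r4 assume r: "r0 \<in> R0" "r4 \<in> R4"
    show "(yb r0 \<and> yb r4 \<longrightarrow> yh r0 \<or> yh r4) \<and> (xb r0 \<and> xb r4 \<longrightarrow> xh r0 \<or> xh r4)"
    proof (cases T0)
      case True then show ?thesis using p1 r unfolding SS_def by blast
    next
      case False then have "T1" "M01 \<or> M11" using p3 p2 by blast+
      then show ?thesis using t1 m01 m11 r unfolding SS_def by blast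
    qed
  qed
  have f2a: F2a
    unfolding F2a_def
  proof (intro ballI)
    fix r0 r3 r' assume r: "r0 \<in> R0" "r3 \<in> R3" "r' \<in> R1 \<union> R4"
    show "(yb r0 \<and> yb r3 \<and> cY r' \<longrightarrow> yh r0 \<or> yh r3) \<and> (xb r0 \<and> xb r3 \<and> cY r' \<longrightarrow> xh r0 \<or> xh r3)"
    proof (cases "cY r'")
      case True then have "\<not> T0" using cT0 r by blast
      then have "T1" "M01 \<or> M11" using p3 p2 by blast+
      then show ?thesis using t1 m01 m11 r unfolding SS_def by blast
    qed simp
  qed
  have f3a: F3a
    unfolding F3a_def
  proof (intro ballI impI)
    fix r0 r3 assume r: "r0 \<in> R0" "r3 \<in> R3"
      and h: "yh r0 \<and> SS yb yh ((R0 \<union> R2) - {r0}) \<and> \<not> yh r3 \<and> xb r0 \<and> xb r3"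
    have "T1" using getT1[of r0] r h by blast
    moreover have "\<not> NN" using nnI[of r3] r h bxy unfolding cY_def by blast
    ultimately have "M01 \<or> M11" using p2 by blast
    moreover have "\<not> M01" using m01 r h hxy unfolding SS_def by blast
    ultimately show "xh r0" using m11 r h unfolding SS_def by blast
  qed
  have f1b: F1b
    unfolding F1b_def
  proof (intro ballI)
    fix r2 r4 assume r: "r2 \<in> R2" "r4 \<in> R4"
    show "(yb r2 \<and> cY r4 \<longrightarrow> yh r2) \<and> (xb r2 \<and> cY r4 \<longrightarrow> xh r2)"
    proof (cases "cY r4")
      case True then have "\<not> T0" using cT0 r by blast
      then have "T1" "M01 \<or> M11" using p3 p2 by blast+
      then show ?thesis using t1 m01 m11 r unfolding SS_def by blast
    qed simp
  qed
  have f2b: F2b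
    unfolding F2b_def
  proof (intro ballI)
    fix r2 r3 r' assume r: "r2 \<in> R2" "r3 \<in> R3" "r' \<in> R1 \<union> R4"
    show "(yb r2 \<and> cY r3 \<and> cY r' \<longrightarrow> yh r2) \<and> (xb r2 \<and> cY r3 \<and> cY r' \<longrightarrow> xh r2)"
    proof (cases "cY r'")
      case True then have "\<not> T0" using cT0 r by blast
      then have "T1" "M01 \<or> M11" using p3 p2 by blast+
      then show ?thesis using t1 m01 m11 r unfolding SS_def by blast
    qed simp
  qed
  have f3b: F3b
    unfolding F3b_def
  proof (intro ballI impI)
    fix r2 r3 assume r: "r2 \<in> R2" "r3 \<in> R3"
      and h: "yh r2 \<and> cY r3 \<and> SS yb yh ((R0 \<union> R2) - {r2}) \<and> xb r2"
    have "T1" using getT1[of r2] r h by blast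
    moreover have "\<not> NN" using nnI[of r3] r h by blast
    ultimately have "M01 \<or> M11" using p2 by blast
    then show "xh r2" using m01 m11 r h unfolding SS_def by blast
  qed
  have f4: F4
    unfolding F4_def
  proof (intro ballI)
    fix r' assume r: "r' \<in> R1 \<union> R4"
    show "(SS yb yh (R3 \<union> R4) \<and> yb r' \<longrightarrow> yh r') \<and> (SS yb yh (R3 \<union> R4) \<and> xb r' \<longrightarrow> xh r')"
    proof (cases T0)
      case True then show ?thesis using p1 r unfolding SS_def by blast
    next
      case False then have "T1" "\<not> NN" using p3 by blast+
      then show ?thesis using nn by blast
    qed
  qed
  have f5: F5
    unfolding F5_def
  proof (intro ballI)
    fix r' r3 r assume r: "r' \<in> R1 \<union> R4" "r3 \<in> R3" "r \<in> R0 \<union> R2"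
    show "(cY r \<and> cY r3 \<and> SS yb yh R4 \<and> yb r' \<longrightarrow> yh r') \<and> (cY r \<and> cY r3 \<and> SS yb yh R4 \<and> xb r' \<longrightarrow> xh r')"
    proof (cases "cY r")
      case True then have "T0" using cT1 p4 r by blast
      then show ?thesis using p1 r unfolding SS_def by blast
    qed simp
  qed
  have f6: F6
    unfolding F6_def
  proof (intro ballI impI)
    fix r' r3 assume r: "r' \<in> R1 \<union> R4" "r3 \<in> R3"
      and h: "yh r' \<and> cY r3 \<and> SS yb yh ((R1 \<union> R4) - {r'}) \<and> xb r'"
    have "T0"
    proof (rule ccontr)
      assume "\<not> T0"
      then have "T1" using p3 by blast
      then have "SS yb yh R" using t1 unfolding SS_Un by blast
      moreover have "SS yb yh (R1 \<union> R4)" by (rule SS_ins) (use h in blast)+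
      ultimately have "T0" unfolding T0_def SS_Un by blast
      then show False using \<open>\<not> T0\<close> by blast
    qed
    then show "xh r'" using p1 r h unfolding SS_def by blast
  qed
  have f7: F7
    unfolding F7_def
  proof (intro ballI impI)
    fix r0 r3 r3' assume r: "r0 \<in> R0" "r3 \<in> R3" "r3' \<in> R3" "r3 \<noteq> r3'"
      and h: "yh r0 \<and> cY r3' \<and> SS yb yh ((R0 \<union> R2) - {r0}) \<and> xb r0 \<and> xb r3"
    have "T1" using getT1[of r0] r h by blast
    moreover have "\<not> NN" using nnI[of r3'] r h by blast
    ultimately have "M01 \<or> M11" using p2 by blast
    then show "xh r0 \<or> xh r3" using m01 m11 r h unfolding SS_def by blast
  qed
  show ?thesis using fR f1a f2a f3a f1b f2b f3b f4 f5 f6 f7 by blast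
qed

end


definition "cR P' q = {r \<in> P'. q \<notin> atoms_rule r}"
definition "cR0 P' q = {r \<in> P'. LPos q \<in> B r}"
definition "cR1 P' q = {r \<in> P'. LNot q \<in> B r}"
definition "cR2 P' q = {r \<in> P'. LNotNot q \<in> B r \<and> q \<notin> H r}"
definition "cR3 P' q = {r \<in> P'. LNotNot q \<in> B r \<and> q \<in> H r}"
definition "cR4 P' q = {r \<in> P'. LNotNot q \<notin> B r \<and> q \<in> H r}"
definition "cS1a P' q = {(H r0 \<union> Hq q r4, Bq q r0 \<union> B r4) | r0 r4. r0 \<in> cR0 P' q \<and> r4 \<in> cR4 P' q}"
definition "cS2a P' q = {(H r0 \<union> Hq q r3,
              Bq q r0 \<union> Bq q r3 \<union> LNot ` Hq q r' \<union> lnn ` Bq q r')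
            | r0 r3 r'. r0 \<in> cR0 P' q \<and> r3 \<in> cR3 P' q \<and> r' \<in> cR1 P' q \<union> cR4 P' q}"
definition "cS3a P' q = {(H r0, Bq q r0 \<union> {LNotNot h} \<union> D \<union> Bq q r3 \<union> LNot ` Hq q r3)
            | r0 r3 h D. r0 \<in> cR0 P' q \<and> r3 \<in> cR3 P' q \<and> h \<in> H r0 \<and> D \<in> Dq q ((cR0 P' q \<union> cR2 P' q) - {r0})}"
definition "cS1b P' q = {(H r2, Bq q r2 \<union> LNot ` Hq q r4 \<union> lnn ` B r4) | r2 r4. r2 \<in> cR2 P' q \<and> r4 \<in> cR4 P' q}"
definition "cS2b P' q = {(H r2, Bq q r2 \<union> LNot ` (Hq q r3 \<union> Hq q r') \<union> lnn ` (Bq q r3 \<union> Bq q r'))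
            | r2 r3 r'. r2 \<in> cR2 P' q \<and> r3 \<in> cR3 P' q \<and> r' \<in> cR1 P' q \<union> cR4 P' q}"
definition "cS3b P' q = {(H r2, Bq q r2 \<union> LNot ` Hq q r3 \<union> lnn ` (Bq q r3 \<union> {LPos h}) \<union> D)
            | r2 r3 h D. r2 \<in> cR2 P' q \<and> r3 \<in> cR3 P' q \<and> h \<in> H r2 \<and> D \<in> Dq q ((cR0 P' q \<union> cR2 P' q) - {r2})}"
definition "cS4 P' q = {(Hq q r', Bq q r' \<union> D)
            | r' D. r' \<in> cR1 P' q \<union> cR4 P' q \<and> D \<in> Dq q (cR3 P' q \<union> cR4 P' q) \<and> D \<inter> lnot ` Bq q r' = {}}"
definition "cS5 P' q = {(Hq q r', Bq q r' \<union> LNot ` (H r \<union> Hq q r3) \<union> lnn ` (Bq q r \<union> Bq q r3) \<union> D)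
            | r' r3 r D. r' \<in> cR1 P' q \<union> cR4 P' q \<and> r3 \<in> cR3 P' q \<and> r \<in> cR0 P' q \<union> cR2 P' q \<and> D \<in> Dq q (cR4 P' q)
                 \<and> D \<inter> lnot ` Bq q r' = {}}"
definition "cS6 P' q = {(Hq q r', Bq q r' \<union> LNot ` Hq q r3 \<union> lnn ` (Bq q r3 \<union> {LPos h}) \<union> D)
            | r' r3 h D. r' \<in> cR1 P' q \<union> cR4 P' q \<and> r3 \<in> cR3 P' q \<and> h \<in> Hq q r'
                 \<and> D \<in> Dq q ((cR1 P' q \<union> cR4 P' q) - {r'})}"
definition "cS7 P' q = {(H r0 \<union> Hq q r3,
              Bq q r0 \<union> Bq q r3 \<union> LNot ` Hq q r3' \<union> lnn ` (Bq q r3' \<union> {LPos h}) \<union> D)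
            | r0 r3 r3' D h. r0 \<in> cR0 P' q \<and> r3 \<in> cR3 P' q \<and> r3' \<in> cR3 P' q \<and> r3 \<noteq> r3'
                 \<and> D \<in> Dq q ((cR0 P' q \<union> cR2 P' q) - {r0}) \<and> h \<in> H r0}"
definition "cPP P' q = cR P' q \<union> cS1a P' q \<union> cS2a P' q \<union> cS3a P' q \<union> cS1b P' q \<union> cS2b P' q
   \<union> cS3b P' q \<union> cS4 P' q \<union> cS5 P' q \<union> cS6 P' q \<union> cS7 P' q"

lemma fSP_eq: "fSP P q = NF (cPP (NF P) q)"
  unfolding fSP_def Let_def cPP_def cR_def cR0_def cR1_def cR2_def cR3_def cR4_def
    cS1a_def cS2a_def cS3a_def cS1b_def cS2b_def cS3b_def cS4_def cS5_def cS6_def cS7_def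
  by (rule refl)


definition nfl :: "'a rule \<Rightarrow> bool" where
  "nfl r = (\<not> tautological r \<and> H r \<inter> Bneg r = {} \<and> Bpos r \<inter> Bnn r = {})"

lemma Bpos_nf: "Bpos (nf_simp r) = Bpos r" unfolding Bpos_def B_nf by auto
lemma Bneg_nf: "Bneg (nf_simp r) = Bneg r" unfolding Bneg_def B_nf by auto
lemma Bnn_nf: "Bnn (nf_simp r) = Bnn r - Bpos r" unfolding Bnn_def Bpos_def B_nf by auto

lemma nfl_nf: "\<not> tautological r \<Longrightarrow> nfl (nf_simp r)"
  unfolding nfl_def tautological_def Bpos_nf Bneg_nf Bnn_nf H_nf by blast

lemma NF_nfl: "r \<in> NF P \<Longrightarrow> nfl r"
  unfolding NF_def Let_def using nfl_nf by auto

definition YB :: "'a \<Rightarrow> 'a set \<Rightarrow> 'a rule \<Rightarrow> bool" where "YB q Y r = (\<forall>l\<in>Bq q r. tY Y l)"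
definition XB :: "'a \<Rightarrow> 'a set \<Rightarrow> 'a set \<Rightarrow> 'a rule \<Rightarrow> bool" where "XB q X Y r = (\<forall>l\<in>Bq q r. tX X Y l)"
definition HH :: "'a \<Rightarrow> 'a set \<Rightarrow> 'a rule \<Rightarrow> bool" where "HH q Z r = (Hq q r \<inter> Z \<noteq> {})"

lemma Bq_latom: "l \<in> Bq q r \<Longrightarrow> latom l \<noteq> q"
  unfolding Bq_def by (cases l) auto

lemma tY_ins: "latom l \<noteq> q \<Longrightarrow> tY (insert q Y) l = tY Y l" by (cases l) auto
lemma tX_ins1: "latom l \<noteq> q \<Longrightarrow> tX (insert q X) Y l = tX X Y l" by (cases l) auto
lemma tX_ins2: "latom l \<noteq> q \<Longrightarrow> tX X (insert q Y) l = tX X Y l" by (cases l) auto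
lemma tX_same: "tX Y Y l = tY Y l" by (cases l) auto

lemma YB_ins[simp]: "YB q (insert q Y) r = YB q Y r"
  unfolding YB_def using tY_ins Bq_latom by metis
lemma XB_ins1[simp]: "XB q (insert q X) Y r = XB q X Y r"
  unfolding XB_def using tX_ins1 Bq_latom by metis
lemma XB_ins2[simp]: "XB q X (insert q Y) r = XB q X Y r"
  unfolding XB_def using tX_ins2 Bq_latom by metis
lemma XB_same[simp]: "XB q Y Y r = YB q Y r"
  unfolding XB_def YB_def by (simp add: tX_same)
lemma HH_ins[simp]: "HH q (insert q Z) r = HH q Z r"
  unfolding HH_def Hq_def by auto

lemma B_split: "B r = Bq q r \<union> (B r \<inter> {LPos q, LNot q, LNotNot q})"
  unfolding Bq_def by auto

lemma ball_B_split: "(\<forall>l\<in>B r. P l) \<longleftrightarrow> (\<forall>l\<in>Bq q r. P l) \<and> (LPos q \<in> B r \<longrightarrow> P (LPos q))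
   \<and> (LNot q \<in> B r \<longrightarrow> P (LNot q)) \<and> (LNotNot q \<in> B r \<longrightarrow> P (LNotNot q))"
  unfolding Bq_def by auto

lemma rsat_dec: "rsat X Y r \<longleftrightarrow>
  ((YB q Y r \<and> (LPos q \<in> B r \<longrightarrow> q \<in> Y) \<and> (LNot q \<in> B r \<longrightarrow> q \<notin> Y) \<and> (LNotNot q \<in> B r \<longrightarrow> q \<in> Y))
     \<longrightarrow> HH q Y r \<or> (q \<in> H r \<and> q \<in> Y)) \<and>
  ((XB q X Y r \<and> (LPos q \<in> B r \<longrightarrow> q \<in> X) \<and> (LNot q \<in> B r \<longrightarrow> q \<notin> Y) \<and> (LNotNot q \<in> B r \<longrightarrow> q \<in> Y))
     \<longrightarrow> HH q X r \<or> (q \<in> H r \<and> q \<in> X))"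
proof -
  have bY: "(\<forall>l\<in>B r. tY Y l) \<longleftrightarrow> YB q Y r \<and> (LPos q \<in> B r \<longrightarrow> q \<in> Y) \<and> (LNot q \<in> B r \<longrightarrow> q \<notin> Y) \<and> (LNotNot q \<in> B r \<longrightarrow> q \<in> Y)"
    unfolding YB_def ball_B_split[of r _ q] by simp
  have bX: "(\<forall>l\<in>B r. tX X Y l) \<longleftrightarrow> XB q X Y r \<and> (LPos q \<in> B r \<longrightarrow> q \<in> X) \<and> (LNot q \<in> B r \<longrightarrow> q \<notin> Y) \<and> (LNotNot q \<in> B r \<longrightarrow> q \<in> Y)"
    unfolding XB_def ball_B_split[of r _ q] by simp
  have h: "H r \<inter> Z \<noteq> {} \<longleftrightarrow> HH q Z r \<or> (q \<in> H r \<and> q \<in> Z)" for Z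
    unfolding HH_def Hq_def by auto
  show ?thesis unfolding rsat_def bY bX h ..
qed

lemma atoms_q: "q \<in> atoms_rule r \<longleftrightarrow> q \<in> H r \<or> LPos q \<in> B r \<or> LNot q \<in> B r \<or> LNotNot q \<in> B r"
  unfolding atoms_rule_def Bpos_def Bneg_def Bnn_def by auto

lemma nfl_facts:
  assumes "nfl r"
  shows "LPos q \<in> B r \<Longrightarrow> q \<notin> H r" "LPos q \<in> B r \<Longrightarrow> LNot q \<notin> B r" "LPos q \<in> B r \<Longrightarrow> LNotNot q \<notin> B r"
    "LNot q \<in> B r \<Longrightarrow> q \<notin> H r" "LNot q \<in> B r \<Longrightarrow> LNotNot q \<notin> B r"
  using assms unfolding nfl_def tautological_def Bpos_def Bneg_def Bnn_def by auto

lemma rsat_cls: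
  assumes "nfl r" "X \<subseteq> Y"
  shows "rsat X Y r \<longleftrightarrow>
   (if q \<notin> atoms_rule r then (YB q Y r \<longrightarrow> HH q Y r) \<and> (XB q X Y r \<longrightarrow> HH q X r)
    else if LPos q \<in> B r then (q \<in> Y \<longrightarrow> YB q Y r \<longrightarrow> HH q Y r) \<and> (q \<in> X \<longrightarrow> XB q X Y r \<longrightarrow> HH q X r)
    else if LNot q \<in> B r then (q \<notin> Y \<longrightarrow> (YB q Y r \<longrightarrow> HH q Y r) \<and> (XB q X Y r \<longrightarrow> HH q X r))
    else if LNotNot q \<in> B r \<and> q \<notin> H r then (q \<in> Y \<longrightarrow> (YB q Y r \<longrightarrow> HH q Y r) \<and> (XB q X Y r \<longrightarrow> HH q X r))
    else if LNotNot q \<in> B r then (q \<in> Y \<and> q \<notin> X \<longrightarrow> XB q X Y r \<longrightarrow> HH q X r)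
    else (q \<notin> Y \<longrightarrow> YB q Y r \<longrightarrow> HH q Y r) \<and> (q \<notin> X \<longrightarrow> XB q X Y r \<longrightarrow> HH q X r))"
proof -
  note f = nfl_facts[OF assms(1), of q]
  show ?thesis
  proof (cases "q \<in> atoms_rule r")
    case False then show ?thesis unfolding rsat_dec[of X Y r q] atoms_q by auto
  next
    case qa: True
    show ?thesis
    proof (cases "LPos q \<in> B r")
      case True then show ?thesis unfolding rsat_dec[of X Y r q] using f qa by auto
    next
      case F0: False
      show ?thesis
      proof (cases "LNot q \<in> B r")
        case True then show ?thesis unfolding rsat_dec[of X Y r q] using f qa F0 by auto
      next
        case F1: False
        show ?thesis
        proof (cases "LNotNot q \<in> B r")
          case True then show ?thesis unfolding rsat_dec[of X Y r q] using f qa F0 F1 assms(2) by auto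
        next
          case False
          then have "q \<in> H r" using qa F0 F1 unfolding atoms_q by blast
          then show ?thesis unfolding rsat_dec[of X Y r q] using qa F0 F1 False assms(2) by auto
        qed
      qed
    qed
  qed
qed


definition "iR q r = (q \<notin> atoms_rule r)"
definition "i0 q r = (LPos q \<in> B r)"
definition "i1 q r = (LNot q \<in> B r)"
definition "i2 q r = (LNotNot q \<in> B r \<and> q \<notin> H r)"
definition "i3 q r = (LNotNot q \<in> B r \<and> q \<in> H r)"
definition "i4 q r = (LNotNot q \<notin> B r \<and> q \<in> H r)"

lemma cls_SS:
  "SS b h (cR P' q) = (\<forall>r\<in>P'. iR q r \<longrightarrow> b r \<longrightarrow> h r)"
  "SS b h (cR0 P' q) = (\<forall>r\<in>P'. i0 q r \<longrightarrow> b r \<longrightarrow> h r)"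
  "SS b h (cR1 P' q) = (\<forall>r\<in>P'. i1 q r \<longrightarrow> b r \<longrightarrow> h r)"
  "SS b h (cR2 P' q) = (\<forall>r\<in>P'. i2 q r \<longrightarrow> b r \<longrightarrow> h r)"
  "SS b h (cR3 P' q) = (\<forall>r\<in>P'. i3 q r \<longrightarrow> b r \<longrightarrow> h r)"
  "SS b h (cR4 P' q) = (\<forall>r\<in>P'. i4 q r \<longrightarrow> b r \<longrightarrow> h r)"
  unfolding SS_def cR_def cR0_def cR1_def cR2_def cR3_def cR4_def iR_def i0_def i1_def i2_def i3_def i4_def
  by auto

lemma rsat_conj:
  assumes "nfl r" "X \<subseteq> Y"
  shows "rsat X Y r \<longleftrightarrow>
    (iR q r \<longrightarrow> (YB q Y r \<longrightarrow> HH q Y r) \<and> (XB q X Y r \<longrightarrow> HH q X r)) \<and>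
    (i0 q r \<longrightarrow> (q \<in> Y \<longrightarrow> YB q Y r \<longrightarrow> HH q Y r) \<and> (q \<in> X \<longrightarrow> XB q X Y r \<longrightarrow> HH q X r)) \<and>
    (i1 q r \<longrightarrow> (q \<notin> Y \<longrightarrow> (YB q Y r \<longrightarrow> HH q Y r) \<and> (XB q X Y r \<longrightarrow> HH q X r))) \<and>
    (i2 q r \<longrightarrow> (q \<in> Y \<longrightarrow> (YB q Y r \<longrightarrow> HH q Y r) \<and> (XB q X Y r \<longrightarrow> HH q X r))) \<and>
    (i3 q r \<longrightarrow> (q \<in> Y \<and> q \<notin> X \<longrightarrow> XB q X Y r \<longrightarrow> HH q X r)) \<and>
    (i4 q r \<longrightarrow> (q \<notin> Y \<longrightarrow> YB q Y r \<longrightarrow> HH q Y r) \<and> (q \<notin> X \<longrightarrow> XB q X Y r \<longrightarrow> HH q X r))"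
proof -
  note f = nfl_facts[OF assms(1), of q]
  note c = rsat_cls[OF assms, of q]
  show ?thesis
  proof (cases "q \<in> atoms_rule r")
    case False
    then have "\<not> i0 q r" "\<not> i1 q r" "\<not> i2 q r" "\<not> i3 q r" "\<not> i4 q r" "iR q r"
      unfolding atoms_q i0_def i1_def i2_def i3_def i4_def iR_def by auto
    then show ?thesis using c False by simp
  next
    case qa: True
    then have nR: "\<not> iR q r" unfolding iR_def by simp
    show ?thesis
    proof (cases "LPos q \<in> B r")
      case True
      then have "i0 q r" "\<not> i1 q r" "\<not> i2 q r" "\<not> i3 q r" "\<not> i4 q r"
        unfolding i0_def i1_def i2_def i3_def i4_def using f by auto
      then show ?thesis using c qa True nR by simp
    next
      case F0: False
      show ?thesis
      proof (cases "LNot q \<in> B r")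
        case True
        then have "\<not> i0 q r" "i1 q r" "\<not> i2 q r" "\<not> i3 q r" "\<not> i4 q r"
          unfolding i0_def i1_def i2_def i3_def i4_def using f F0 by auto
        then show ?thesis using c qa True nR F0 by simp
      next
        case F1: False
        have "\<not> i0 q r" "\<not> i1 q r" using F0 F1 unfolding i0_def i1_def by auto
        moreover have "LNotNot q \<notin> B r \<Longrightarrow> q \<in> H r" using qa F0 F1 unfolding atoms_q by blast
        ultimately show ?thesis using c qa nR F0 F1 unfolding i2_def i3_def i4_def by (auto split: if_splits)
      qed
    qed
  qed
qed

definition "conjF q X Y r = ((iR q r \<longrightarrow> (YB q Y r \<longrightarrow> HH q Y r) \<and> (XB q X Y r \<longrightarrow> HH q X r)) \<and>
    (i0 q r \<longrightarrow> (q \<in> Y \<longrightarrow> YB q Y r \<longrightarrow> HH q Y r) \<and> (q \<in> X \<longrightarrow> XB q X Y r \<longrightarrow> HH q X r)) \<and>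
    (i1 q r \<longrightarrow> (q \<notin> Y \<longrightarrow> (YB q Y r \<longrightarrow> HH q Y r) \<and> (XB q X Y r \<longrightarrow> HH q X r))) \<and>
    (i2 q r \<longrightarrow> (q \<in> Y \<longrightarrow> (YB q Y r \<longrightarrow> HH q Y r) \<and> (XB q X Y r \<longrightarrow> HH q X r))) \<and>
    (i3 q r \<longrightarrow> (q \<in> Y \<and> q \<notin> X \<longrightarrow> XB q X Y r \<longrightarrow> HH q X r)) \<and>
    (i4 q r \<longrightarrow> (q \<notin> Y \<longrightarrow> YB q Y r \<longrightarrow> HH q Y r) \<and> (q \<notin> X \<longrightarrow> XB q X Y r \<longrightarrow> HH q X r)))"

lemma ht_conj:
  assumes nf: "\<forall>r\<in>P'. nfl r"
  shows "ht_model X Y P' \<longleftrightarrow> X \<subseteq> Y \<and> (\<forall>r\<in>P'. conjF q X Y r)"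
proof (cases "X \<subseteq> Y")
  case True
  have "(\<forall>r\<in>P'. rsat X Y r) \<longleftrightarrow> (\<forall>r\<in>P'. conjF q X Y r)"
  proof (rule ball_cong[OF refl])
    fix r assume "r \<in> P'"
    then have "nfl r" using nf by blast
    from rsat_conj[OF this True, of q] show "rsat X Y r = conjF q X Y r" unfolding conjF_def .
  qed
  then show ?thesis unfolding ht_model_iff using True by blast
qed (simp add: ht_model_iff)

context
  fixes P' :: "'a rule set" and q :: 'a and X Y :: "'a set"
  assumes nf: "\<forall>r\<in>P'. nfl r" and qY: "q \<notin> Y" and XY: "X \<subseteq> Y"
begin

lemma qX: "q \<notin> X" using qY XY by blast

lemma htA: "ht_model Y Y P' \<longleftrightarrow> SS (YB q Y) (HH q Y) (cR P' q \<union> cR1 P' q \<union> cR4 P' q)"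
  unfolding ht_conj[OF nf, where q=q] SS_Un cls_SS conjF_def using XY by (simp add: qY qX ball_conj_distrib; blast)

lemma htB: "ht_model (insert q Y) (insert q Y) P' \<longleftrightarrow> SS (YB q Y) (HH q Y) (cR P' q \<union> cR0 P' q \<union> cR2 P' q)"
  unfolding ht_conj[OF nf, where q=q] SS_Un cls_SS conjF_def using XY by (simp add: qY qX ball_conj_distrib; blast)

lemma htC: "ht_model Y (insert q Y) P' \<longleftrightarrow> SS (YB q Y) (HH q Y) (cR P' q \<union> cR0 P' q \<union> cR2 P' q)
   \<and> SS (YB q Y) (HH q Y) (cR P' q \<union> cR2 P' q \<union> cR3 P' q \<union> cR4 P' q)"
  unfolding ht_conj[OF nf, where q=q] SS_Un cls_SS conjF_def using XY by (simp add: qY qX ball_conj_distrib; blast)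

lemma htD: "ht_model X Y P' \<longleftrightarrow> SS (YB q Y) (HH q Y) (cR P' q \<union> cR1 P' q \<union> cR4 P' q)
   \<and> SS (XB q X Y) (HH q X) (cR P' q \<union> cR1 P' q \<union> cR4 P' q)"
  unfolding ht_conj[OF nf, where q=q] SS_Un cls_SS conjF_def using XY by (simp add: qY qX ball_conj_distrib; blast)

lemma htE: "ht_model X (insert q Y) P' \<longleftrightarrow> SS (YB q Y) (HH q Y) (cR P' q \<union> cR0 P' q \<union> cR2 P' q)
   \<and> SS (XB q X Y) (HH q X) (cR P' q \<union> cR2 P' q \<union> cR3 P' q \<union> cR4 P' q)"
  unfolding ht_conj[OF nf, where q=q] SS_Un cls_SS conjF_def using XY by (simp add: qY qX ball_conj_distrib; blast)

lemma htF: "ht_model (insert q X) (insert q Y) P' \<longleftrightarrow> SS (YB q Y) (HH q Y) (cR P' q \<union> cR0 P' q \<union> cR2 P' q)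
   \<and> SS (XB q X Y) (HH q X) (cR P' q \<union> cR0 P' q \<union> cR2 P' q)"
  unfolding ht_conj[OF nf, where q=q] SS_Un cls_SS conjF_def using XY by (simp add: qY qX ball_conj_distrib; blast)

end


lemma tY_lnot[simp]: "tY Y (lnot l) = (\<not> tY Y l)" by (cases l) auto
lemma tY_lnn[simp]: "tY Y (lnn l) = tY Y l" by (cases l) auto
lemma tX_lnot[simp]: "tX X Y (lnot l) = (\<not> tY Y l)" by (cases l) auto
lemma tX_lnn[simp]: "tX X Y (lnn l) = tY Y l" by (cases l) auto

lemma rsat_pair: "rsat X Y (Hd, Bd) = (((\<forall>l\<in>Bd. tY Y l) \<longrightarrow> Hd \<inter> Y \<noteq> {}) \<and> ((\<forall>l\<in>Bd. tX X Y l) \<longrightarrow> Hd \<inter> X \<noteq> {}))"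
  by (simp add: rsat_def H_def B_def)

lemma ballY_Bq[simp]: "(\<forall>l\<in>Bq q r. tY Y l) = YB q Y r" by (simp add: YB_def)
lemma ballX_Bq[simp]: "(\<forall>l\<in>Bq q r. tX X Y l) = XB q X Y r" by (simp add: XB_def)
lemma ball_lnn_Y[simp]: "(\<forall>l\<in>lnn ` S. tY Y l) = (\<forall>l\<in>S. tY Y l)" by simp
lemma ball_lnn_X[simp]: "(\<forall>l\<in>lnn ` S. tX X Y l) = (\<forall>l\<in>S. tY Y l)" by simp
lemma ball_LNot_Y[simp]: "(\<forall>l\<in>LNot ` S. tY Y l) = (S \<inter> Y = {})" by auto
lemma ball_LNot_X[simp]: "(\<forall>l\<in>LNot ` S. tX X Y l) = (S \<inter> Y = {})" by auto
lemma HqE[simp]: "(Hq q r \<inter> Z = {}) = (\<not> HH q Z r)" by (simp add: HH_def)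
lemma Un_Int_ne: "((A \<union> C) \<inter> Z \<noteq> {}) = (A \<inter> Z \<noteq> {} \<or> C \<inter> Z \<noteq> {})" by blast
lemma Un_Int_e: "((A \<union> C) \<inter> Z = {}) = (A \<inter> Z = {} \<and> C \<inter> Z = {})" by blast

lemma Dq_mem: "D \<in> Dq q Q \<longleftrightarrow> (\<exists>Q1 Q2 l1 l2. D = lnot ` (l1 ` Q1) \<union> LNotNot ` (l2 ` Q2) \<and>
      Q1 \<union> Q2 = Q \<and> Q1 \<inter> Q2 = {} \<and> (\<forall>r\<in>Q1. l1 r \<in> Bq q r) \<and> (\<forall>r\<in>Q2. l2 r \<in> Hq q r))"
  unfolding Dq_def by (rule mem_Collect_eq)

lemma Dq_lit: "D \<in> Dq q Q \<Longrightarrow> l \<in> D \<Longrightarrow> (\<exists>a. l = LNot a \<or> l = LNotNot a)"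
proof -
  assume "D \<in> Dq q Q" "l \<in> D"
  then obtain Q1 Q2 :: "'a rule set" and l1 l2 where D: "D = lnot ` (l1 ` Q1) \<union> LNotNot ` (l2 ` Q2)" unfolding Dq_mem by blast
  have lx: "\<exists>a. lnot x = LNot a \<or> lnot x = LNotNot a" for x :: "'a lit" by (cases x) auto
  from \<open>l \<in> D\<close> D have "l \<in> lnot ` (l1 ` Q1) \<or> l \<in> LNotNot ` (l2 ` Q2)" by simp
  then show ?thesis
  proof
    assume "l \<in> lnot ` (l1 ` Q1)"
    then obtain x where "l = lnot x" by blast
    then show ?thesis using lx by simp
  next
    assume "l \<in> LNotNot ` (l2 ` Q2)"
    then obtain y where "l = LNotNot y" by blast
    then show ?thesis by simp
  qed
qed

lemma Dq_X: "D \<in> Dq q Q \<Longrightarrow> (\<forall>l\<in>D. tX X Y l) = (\<forall>l\<in>D. tY Y l)"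
proof -
  assume d: "D \<in> Dq q Q"
  have "l \<in> D \<Longrightarrow> tX X Y l = tY Y l" for l using Dq_lit[OF d, of l] by auto
  then show ?thesis by blast
qed

lemma Dq_ex: "(\<exists>D\<in>Dq q Q. \<forall>l\<in>D. tY Y l) \<longleftrightarrow> SS (YB q Y) (HH q Y) Q"
proof
  assume "\<exists>D\<in>Dq q Q. \<forall>l\<in>D. tY Y l"
  then obtain D where d: "D \<in> Dq q Q" "\<forall>l\<in>D. tY Y l" by blast
  from d(1) obtain Q1 Q2 l1 l2 where D: "Q1 \<union> Q2 = Q" "\<forall>r\<in>Q1. l1 r \<in> Bq q r" "\<forall>r\<in>Q2. l2 r \<in> Hq q r"
    "D = lnot ` (l1 ` Q1) \<union> LNotNot ` (l2 ` Q2)" unfolding Dq_mem by (elim exE conjE) simp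
  have D4: "\<forall>l\<in>lnot ` (l1 ` Q1) \<union> LNotNot ` (l2 ` Q2). tY Y l" using d(2) D(4) by simp
  show "SS (YB q Y) (HH q Y) Q" unfolding SS_def
  proof (intro ballI impI)
    fix r assume r: "r \<in> Q" and yb: "YB q Y r"
    show "HH q Y r"
    proof (cases "r \<in> Q1")
      case True
      then have "lnot (l1 r) \<in> lnot ` (l1 ` Q1) \<union> LNotNot ` (l2 ` Q2)" by blast
      then have "tY Y (lnot (l1 r))" using D4 by blast
      then have "\<not> tY Y (l1 r)" by simp
      moreover have "tY Y (l1 r)" using yb D(2) True unfolding YB_def by blast
      ultimately show ?thesis by blast
    next
      case False
      then have "r \<in> Q2" using r D(1) by blast
      then have m: "LNotNot (l2 r) \<in> lnot ` (l1 ` Q1) \<union> LNotNot ` (l2 ` Q2)" by blast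
      have a1: "l2 r \<in> Hq q r" using D(3) \<open>r \<in> Q2\<close> by blast
      have "tY Y (LNotNot (l2 r))" using D4 m by blast
      then have a2: "l2 r \<in> Y" by simp
      show ?thesis unfolding HH_def using a1 a2 by blast
    qed
  qed
next
  assume s: "SS (YB q Y) (HH q Y) Q"
  define Q1 where "Q1 = {r \<in> Q. \<not> YB q Y r}"
  define Q2 where "Q2 = {r \<in> Q. YB q Y r}"
  define l1 where "l1 r = (SOME l. l \<in> Bq q r \<and> \<not> tY Y l)" for r
  define l2 where "l2 r = (SOME h. h \<in> Hq q r \<and> h \<in> Y)" for r
  have l1: "l1 r \<in> Bq q r \<and> \<not> tY Y (l1 r)" if "r \<in> Q1" for r
  proof -
    have "\<exists>l. l \<in> Bq q r \<and> \<not> tY Y l" using that unfolding Q1_def YB_def by blast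
    then show ?thesis unfolding l1_def by (rule someI_ex)
  qed
  have l2: "l2 r \<in> Hq q r \<and> l2 r \<in> Y" if "r \<in> Q2" for r
  proof -
    have "HH q Y r" using s that unfolding Q2_def SS_def by blast
    then have "\<exists>h. h \<in> Hq q r \<and> h \<in> Y" unfolding HH_def by blast
    then show ?thesis unfolding l2_def by (rule someI_ex)
  qed
  have u: "Q1 \<union> Q2 = Q" "Q1 \<inter> Q2 = {}" unfolding Q1_def Q2_def by auto
  have "lnot ` (l1 ` Q1) \<union> LNotNot ` (l2 ` Q2) \<in> Dq q Q"
    unfolding Dq_mem
    apply (rule exI[of _ Q1], rule exI[of _ Q2], rule exI[of _ l1], rule exI[of _ l2])
    using u l1 l2 by simp
  moreover have "\<forall>l\<in>lnot ` (l1 ` Q1) \<union> LNotNot ` (l2 ` Q2). tY Y l" using l1 l2 by auto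
  ultimately show "\<exists>D\<in>Dq q Q. \<forall>l\<in>D. tY Y l" by blast
qed

lemma Dq_disj: "D \<in> Dq q Q \<Longrightarrow> \<forall>l\<in>D. tY Y l \<Longrightarrow> \<forall>l\<in>S. tY Y l \<Longrightarrow> D \<inter> lnot ` S = {}"
  by auto


lemma ball_setof2: "(\<forall>x\<in>{f a b | a b. P a b}. Q x) \<longleftrightarrow> (\<forall>a b. P a b \<longrightarrow> Q (f a b))" by blast
lemma ball_setof3: "(\<forall>x\<in>{f a b c | a b c. P a b c}. Q x) \<longleftrightarrow> (\<forall>a b c. P a b c \<longrightarrow> Q (f a b c))" by blast
lemma ball_setof4: "(\<forall>x\<in>{f a b c d | a b c d. P a b c d}. Q x) \<longleftrightarrow> (\<forall>a b c d. P a b c d \<longrightarrow> Q (f a b c d))" by blast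
lemma ball_setof5: "(\<forall>x\<in>{f a b c d e | a b c d e. P a b c d e}. Q x) \<longleftrightarrow> (\<forall>a b c d e. P a b c d e \<longrightarrow> Q (f a b c d e))" by blast

locale fc =
  fixes P' :: "'a rule set" and q :: 'a and X Y :: "'a set"
  assumes nf: "\<forall>r\<in>P'. nfl r" and qY: "q \<notin> Y" and XY: "X \<subseteq> Y"
begin

abbreviation "yb \<equiv> YB q Y"
abbreviation "xb \<equiv> XB q X Y"
abbreviation "yh \<equiv> HH q Y"
abbreviation "xh \<equiv> HH q X"
abbreviation "R \<equiv> cR P' q"
abbreviation "R0 \<equiv> cR0 P' q"
abbreviation "R1 \<equiv> cR1 P' q"
abbreviation "R2 \<equiv> cR2 P' q"
abbreviation "R3 \<equiv> cR3 P' q"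
abbreviation "R4 \<equiv> cR4 P' q"

lemma qX': "q \<notin> X" using qY XY by blast

lemma HY_ne[simp]: "(H r \<inter> Y \<noteq> {}) = yh r" using qY unfolding HH_def Hq_def by blast
lemma HY_e[simp]: "(H r \<inter> Y = {}) = (\<not> yh r)" using qY unfolding HH_def Hq_def by blast
lemma HX_ne[simp]: "(H r \<inter> X \<noteq> {}) = xh r" using qX' unfolding HH_def Hq_def by blast
lemma HqNE[simp]: "(Hq q r \<inter> Z \<noteq> {}) = HH q Z r" unfolding HH_def by blast

lemma HqAll[simp]: "(\<forall>x\<in>Hq q r. x \<notin> Z) = (\<not> HH q Z r)" unfolding HH_def by blast
lemma HAll[simp]: "(\<forall>x\<in>H r. x \<notin> Y) = (\<not> yh r)" using HY_e by blast

lemma B4: "r \<in> R4 \<Longrightarrow> B r = Bq q r"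
proof -
  assume r: "r \<in> R4"
  then have n: "nfl r" "q \<in> H r" "LNotNot q \<notin> B r" using nf unfolding cR4_def by auto
  have "LPos q \<notin> B r" "LNot q \<notin> B r" using nfl_facts[OF n(1), of q] n(2) by auto
  then show ?thesis using n(3) unfolding Bq_def by auto
qed

lemma hHY: "h \<in> H r \<Longrightarrow> h \<in> Y \<Longrightarrow> yh r" using HY_ne by blast

lemma evR: "r \<in> R \<Longrightarrow> rsat X Y r \<longleftrightarrow> (yb r \<longrightarrow> yh r) \<and> (xb r \<longrightarrow> xh r)"
  using rsat_cls[of r X Y q] nf XY unfolding cR_def by auto

lemma ev1a: "r4 \<in> R4 \<Longrightarrow> rsat X Y (H r0 \<union> Hq q r4, Bq q r0 \<union> B r4) \<longleftrightarrow>
   (yb r0 \<and> yb r4 \<longrightarrow> yh r0 \<or> yh r4) \<and> (xb r0 \<and> xb r4 \<longrightarrow> xh r0 \<or> xh r4)"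
  using B4[of r4] by (simp add: ball_Un rsat_pair Un_Int_ne)

lemma ev2a: "rsat X Y (H r0 \<union> Hq q r3, Bq q r0 \<union> Bq q r3 \<union> LNot ` Hq q r' \<union> lnn ` Bq q r') \<longleftrightarrow>
   (yb r0 \<and> yb r3 \<and> (yb r' \<and> \<not> yh r') \<longrightarrow> yh r0 \<or> yh r3) \<and> (xb r0 \<and> xb r3 \<and> (yb r' \<and> \<not> yh r') \<longrightarrow> xh r0 \<or> xh r3)"
  by (simp add: ball_Un rsat_pair Un_Int_ne; blast)

lemma ev3a: "D \<in> Dq q Q \<Longrightarrow> rsat X Y (H r0, Bq q r0 \<union> {LNotNot h} \<union> D \<union> Bq q r3 \<union> LNot ` Hq q r3) \<longleftrightarrow>
   ((yb r0 \<and> h \<in> Y \<and> (\<forall>l\<in>D. tY Y l) \<and> yb r3 \<and> \<not> yh r3) \<longrightarrow> yh r0) \<and>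
   ((xb r0 \<and> h \<in> Y \<and> (\<forall>l\<in>D. tY Y l) \<and> xb r3 \<and> \<not> yh r3) \<longrightarrow> xh r0)"
  by (simp add: ball_Un rsat_pair Dq_X; blast)

lemma ev1b: "r4 \<in> R4 \<Longrightarrow> rsat X Y (H r2, Bq q r2 \<union> LNot ` Hq q r4 \<union> lnn ` B r4) \<longleftrightarrow>
   (yb r2 \<and> (yb r4 \<and> \<not> yh r4) \<longrightarrow> yh r2) \<and> (xb r2 \<and> (yb r4 \<and> \<not> yh r4) \<longrightarrow> xh r2)"
  using B4[of r4] by (simp add: ball_Un rsat_pair; blast)

lemma ev2b: "rsat X Y (H r2, Bq q r2 \<union> LNot ` (Hq q r3 \<union> Hq q r') \<union> lnn ` (Bq q r3 \<union> Bq q r')) \<longleftrightarrow>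
   (yb r2 \<and> (yb r3 \<and> \<not> yh r3) \<and> (yb r' \<and> \<not> yh r') \<longrightarrow> yh r2) \<and> (xb r2 \<and> (yb r3 \<and> \<not> yh r3) \<and> (yb r' \<and> \<not> yh r') \<longrightarrow> xh r2)"
  by (simp add: ball_Un rsat_pair Un_Int_e; blast)

lemma ev3b: "D \<in> Dq q Q \<Longrightarrow> rsat X Y (H r2, Bq q r2 \<union> LNot ` Hq q r3 \<union> lnn ` (Bq q r3 \<union> {LPos h}) \<union> D) \<longleftrightarrow>
   ((yb r2 \<and> (yb r3 \<and> \<not> yh r3) \<and> h \<in> Y \<and> (\<forall>l\<in>D. tY Y l)) \<longrightarrow> yh r2) \<and>
   ((xb r2 \<and> (yb r3 \<and> \<not> yh r3) \<and> h \<in> Y \<and> (\<forall>l\<in>D. tY Y l)) \<longrightarrow> xh r2)"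
  by (simp add: ball_Un rsat_pair Dq_X; blast)

lemma ev4: "D \<in> Dq q Q \<Longrightarrow> rsat X Y (Hq q r', Bq q r' \<union> D) \<longleftrightarrow>
   (yb r' \<and> (\<forall>l\<in>D. tY Y l) \<longrightarrow> yh r') \<and> (xb r' \<and> (\<forall>l\<in>D. tY Y l) \<longrightarrow> xh r')"
  by (simp add: ball_Un rsat_pair Dq_X; blast)

lemma ev5: "D \<in> Dq q Q \<Longrightarrow> rsat X Y (Hq q r', Bq q r' \<union> LNot ` (H r \<union> Hq q r3) \<union> lnn ` (Bq q r \<union> Bq q r3) \<union> D) \<longleftrightarrow>
   (yb r' \<and> (yb r \<and> \<not> yh r) \<and> (yb r3 \<and> \<not> yh r3) \<and> (\<forall>l\<in>D. tY Y l) \<longrightarrow> yh r') \<and>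
   (xb r' \<and> (yb r \<and> \<not> yh r) \<and> (yb r3 \<and> \<not> yh r3) \<and> (\<forall>l\<in>D. tY Y l) \<longrightarrow> xh r')"
  by (simp add: ball_Un rsat_pair Dq_X Un_Int_e; blast)

lemma ev6: "D \<in> Dq q Q \<Longrightarrow> rsat X Y (Hq q r', Bq q r' \<union> LNot ` Hq q r3 \<union> lnn ` (Bq q r3 \<union> {LPos h}) \<union> D) \<longleftrightarrow>
   (yb r' \<and> (yb r3 \<and> \<not> yh r3) \<and> h \<in> Y \<and> (\<forall>l\<in>D. tY Y l) \<longrightarrow> yh r') \<and>
   (xb r' \<and> (yb r3 \<and> \<not> yh r3) \<and> h \<in> Y \<and> (\<forall>l\<in>D. tY Y l) \<longrightarrow> xh r')"
  by (simp add: ball_Un rsat_pair Dq_X; blast)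

lemma ev7: "D \<in> Dq q Q \<Longrightarrow> rsat X Y (H r0 \<union> Hq q r3,
      Bq q r0 \<union> Bq q r3 \<union> LNot ` Hq q r3' \<union> lnn ` (Bq q r3' \<union> {LPos h}) \<union> D) \<longleftrightarrow>
   (yb r0 \<and> yb r3 \<and> (yb r3' \<and> \<not> yh r3') \<and> h \<in> Y \<and> (\<forall>l\<in>D. tY Y l) \<longrightarrow> yh r0 \<or> yh r3) \<and>
   (xb r0 \<and> xb r3 \<and> (yb r3' \<and> \<not> yh r3') \<and> h \<in> Y \<and> (\<forall>l\<in>D. tY Y l) \<longrightarrow> xh r0 \<or> xh r3)"
  by (simp add: ball_Un rsat_pair Dq_X Un_Int_ne; blast)

end


lemma fam_gen2:
  assumes "\<And>a b. a \<in> A \<Longrightarrow> b \<in> Bs \<Longrightarrow> Q (f a b) \<longleftrightarrow> C a b"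
  shows "(\<forall>x\<in>{f a b | a b. a \<in> A \<and> b \<in> Bs}. Q x) \<longleftrightarrow> (\<forall>a\<in>A. \<forall>b\<in>Bs. C a b)"
proof
  assume l: "\<forall>x\<in>{f a b | a b. a \<in> A \<and> b \<in> Bs}. Q x"
  show "\<forall>a\<in>A. \<forall>b\<in>Bs. C a b"
  proof (intro ballI)
    fix a b assume ab: "a \<in> A" "b \<in> Bs"
    then have "f a b \<in> {f a b | a b. a \<in> A \<and> b \<in> Bs}" by blast
    then have "Q (f a b)" using l by blast
    then show "C a b" using assms ab by blast
  qed
next
  assume r: "\<forall>a\<in>A. \<forall>b\<in>Bs. C a b"
  show "\<forall>x\<in>{f a b | a b. a \<in> A \<and> b \<in> Bs}. Q x"
  proof
    fix x assume "x \<in> {f a b | a b. a \<in> A \<and> b \<in> Bs}"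
    then obtain a b where ab: "x = f a b" "a \<in> A" "b \<in> Bs" by blast
    then show "Q x" using assms r by blast
  qed
qed

lemma fam_gen3:
  assumes "\<And>a b c. a \<in> A \<Longrightarrow> b \<in> Bs \<Longrightarrow> c \<in> Cs \<Longrightarrow> Q (f a b c) \<longleftrightarrow> C a b c"
  shows "(\<forall>x\<in>{f a b c | a b c. a \<in> A \<and> b \<in> Bs \<and> c \<in> Cs}. Q x) \<longleftrightarrow> (\<forall>a\<in>A. \<forall>b\<in>Bs. \<forall>c\<in>Cs. C a b c)"
proof
  assume l: "\<forall>x\<in>{f a b c | a b c. a \<in> A \<and> b \<in> Bs \<and> c \<in> Cs}. Q x"
  show "\<forall>a\<in>A. \<forall>b\<in>Bs. \<forall>c\<in>Cs. C a b c"
  proof (intro ballI)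
    fix a b c assume ab: "a \<in> A" "b \<in> Bs" "c \<in> Cs"
    then have "f a b c \<in> {f a b c | a b c. a \<in> A \<and> b \<in> Bs \<and> c \<in> Cs}" by blast
    then have "Q (f a b c)" using l by blast
    then show "C a b c" using assms ab by blast
  qed
next
  assume r: "\<forall>a\<in>A. \<forall>b\<in>Bs. \<forall>c\<in>Cs. C a b c"
  show "\<forall>x\<in>{f a b c | a b c. a \<in> A \<and> b \<in> Bs \<and> c \<in> Cs}. Q x"
  proof
    fix x assume "x \<in> {f a b c | a b c. a \<in> A \<and> b \<in> Bs \<and> c \<in> Cs}"
    then obtain a b c where ab: "x = f a b c" "a \<in> A" "b \<in> Bs" "c \<in> Cs" by blast
    then show "Q x" using assms r by blast
  qed
qed

context fc begin

lemma famR: "(\<forall>\<rho>\<in>R. rsat X Y \<rho>) \<longleftrightarrow> (\<forall>r\<in>R. (yb r \<longrightarrow> yh r) \<and> (xb r \<longrightarrow> xh r))"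
  using evR by (intro ball_cong) auto

lemma fam1a: "(\<forall>\<rho>\<in>cS1a P' q. rsat X Y \<rho>) \<longleftrightarrow>
  (\<forall>r0\<in>R0. \<forall>r4\<in>R4. (yb r0 \<and> yb r4 \<longrightarrow> yh r0 \<or> yh r4) \<and> (xb r0 \<and> xb r4 \<longrightarrow> xh r0 \<or> xh r4))"
  unfolding cS1a_def by (rule fam_gen2) (rule ev1a)

lemma fam2a: "(\<forall>\<rho>\<in>cS2a P' q. rsat X Y \<rho>) \<longleftrightarrow>
  (\<forall>r0\<in>R0. \<forall>r3\<in>R3. \<forall>r'\<in>R1 \<union> R4.
   (yb r0 \<and> yb r3 \<and> (yb r' \<and> \<not> yh r') \<longrightarrow> yh r0 \<or> yh r3) \<and> (xb r0 \<and> xb r3 \<and> (yb r' \<and> \<not> yh r') \<longrightarrow> xh r0 \<or> xh r3))"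
  unfolding cS2a_def by (rule fam_gen3) (rule ev2a)

lemma fam1b: "(\<forall>\<rho>\<in>cS1b P' q. rsat X Y \<rho>) \<longleftrightarrow>
  (\<forall>r2\<in>R2. \<forall>r4\<in>R4. (yb r2 \<and> (yb r4 \<and> \<not> yh r4) \<longrightarrow> yh r2) \<and> (xb r2 \<and> (yb r4 \<and> \<not> yh r4) \<longrightarrow> xh r2))"
  unfolding cS1b_def by (rule fam_gen2) (rule ev1b)

lemma fam2b: "(\<forall>\<rho>\<in>cS2b P' q. rsat X Y \<rho>) \<longleftrightarrow>
  (\<forall>r2\<in>R2. \<forall>r3\<in>R3. \<forall>r'\<in>R1 \<union> R4.
   (yb r2 \<and> (yb r3 \<and> \<not> yh r3) \<and> (yb r' \<and> \<not> yh r') \<longrightarrow> yh r2) \<and> (xb r2 \<and> (yb r3 \<and> \<not> yh r3) \<and> (yb r' \<and> \<not> yh r') \<longrightarrow> xh r2))"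
  unfolding cS2b_def by (rule fam_gen3) (rule ev2b)

lemma yh_obt: "HH q Z r \<Longrightarrow> \<exists>h. h \<in> H r \<and> h \<in> Z"
  unfolding HH_def Hq_def by blast
lemma yh_obt': "HH q Z r \<Longrightarrow> \<exists>h. h \<in> Hq q r \<and> h \<in> Z"
  unfolding HH_def by blast
lemma D_obt: "SS yb yh Q \<Longrightarrow> \<exists>D. D \<in> Dq q Q \<and> (\<forall>l\<in>D. tY Y l)"
proof -
  assume a: "SS yb yh Q"
  have "\<exists>D\<in>Dq q Q. \<forall>l\<in>D. tY Y l" by (rule iffD2[OF Dq_ex a])
  then show ?thesis by blast
qed
lemma D_SS: "D \<in> Dq q Q \<Longrightarrow> \<forall>l\<in>D. tY Y l \<Longrightarrow> SS yb yh Q"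
  by (rule iffD1[OF Dq_ex]) blast

lemma xb_yb: "xb r \<Longrightarrow> yb r"
  unfolding XB_def YB_def using tX_tY[OF XY] by blast

lemma fam3a: "(\<forall>\<rho>\<in>cS3a P' q. rsat X Y \<rho>) \<longleftrightarrow>
  (\<forall>r0\<in>R0. \<forall>r3\<in>R3. yh r0 \<and> SS yb yh ((R0 \<union> R2) - {r0}) \<and> \<not> yh r3 \<and> xb r0 \<and> xb r3 \<longrightarrow> xh r0)"
proof
  assume l: "\<forall>\<rho>\<in>cS3a P' q. rsat X Y \<rho>"
  show "\<forall>r0\<in>R0. \<forall>r3\<in>R3. yh r0 \<and> SS yb yh ((R0 \<union> R2) - {r0}) \<and> \<not> yh r3 \<and> xb r0 \<and> xb r3 \<longrightarrow> xh r0"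
  proof (intro ballI impI)
    fix r0 r3 assume r: "r0 \<in> R0" "r3 \<in> R3" and p: "yh r0 \<and> SS yb yh ((R0 \<union> R2) - {r0}) \<and> \<not> yh r3 \<and> xb r0 \<and> xb r3"
    have "yh r0" using p by blast
    then obtain h where h: "h \<in> H r0" "h \<in> Y" using yh_obt by blast
    have "SS yb yh ((R0 \<union> R2) - {r0})" using p by blast
    then obtain D where D: "D \<in> Dq q ((R0 \<union> R2) - {r0})" "\<forall>l\<in>D. tY Y l" using D_obt by blast
    have "(H r0, Bq q r0 \<union> {LNotNot h} \<union> D \<union> Bq q r3 \<union> LNot ` Hq q r3) \<in> cS3a P' q"
      unfolding cS3a_def using r h D by blast
    then have "rsat X Y (H r0, Bq q r0 \<union> {LNotNot h} \<union> D \<union> Bq q r3 \<union> LNot ` Hq q r3)" using l by blast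
    then show "xh r0" unfolding ev3a[OF D(1)] using h D p by blast
  qed
next
  assume rr: "\<forall>r0\<in>R0. \<forall>r3\<in>R3. yh r0 \<and> SS yb yh ((R0 \<union> R2) - {r0}) \<and> \<not> yh r3 \<and> xb r0 \<and> xb r3 \<longrightarrow> xh r0"
  show "\<forall>\<rho>\<in>cS3a P' q. rsat X Y \<rho>"
  proof
    fix \<rho> assume "\<rho> \<in> cS3a P' q"
    then obtain r0 r3 h D where \<rho>: "\<rho> = (H r0, Bq q r0 \<union> {LNotNot h} \<union> D \<union> Bq q r3 \<union> LNot ` Hq q r3)"
      and c: "r0 \<in> R0" "r3 \<in> R3" "h \<in> H r0" "D \<in> Dq q ((R0 \<union> R2) - {r0})" unfolding cS3a_def by blast
    have ss: "SS yb yh ((R0 \<union> R2) - {r0})" if "\<forall>l\<in>D. tY Y l" using D_SS[OF c(4)] that by blast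
    show "rsat X Y \<rho>" unfolding \<rho> ev3a[OF c(4)] using rr c hHY[OF c(3)] ss by blast
  qed
qed

lemma fam3b: "(\<forall>\<rho>\<in>cS3b P' q. rsat X Y \<rho>) \<longleftrightarrow>
  (\<forall>r2\<in>R2. \<forall>r3\<in>R3. yh r2 \<and> (yb r3 \<and> \<not> yh r3) \<and> SS yb yh ((R0 \<union> R2) - {r2}) \<and> xb r2 \<longrightarrow> xh r2)"
proof
  assume l: "\<forall>\<rho>\<in>cS3b P' q. rsat X Y \<rho>"
  show "\<forall>r2\<in>R2. \<forall>r3\<in>R3. yh r2 \<and> (yb r3 \<and> \<not> yh r3) \<and> SS yb yh ((R0 \<union> R2) - {r2}) \<and> xb r2 \<longrightarrow> xh r2"
  proof (intro ballI impI)
    fix r2 r3 assume r: "r2 \<in> R2" "r3 \<in> R3" and p: "yh r2 \<and> (yb r3 \<and> \<not> yh r3) \<and> SS yb yh ((R0 \<union> R2) - {r2}) \<and> xb r2"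
    have "yh r2" using p by blast
    then obtain h where h: "h \<in> H r2" "h \<in> Y" using yh_obt by blast
    have "SS yb yh ((R0 \<union> R2) - {r2})" using p by blast
    then obtain D where D: "D \<in> Dq q ((R0 \<union> R2) - {r2})" "\<forall>l\<in>D. tY Y l" using D_obt by blast
    have "(H r2, Bq q r2 \<union> LNot ` Hq q r3 \<union> lnn ` (Bq q r3 \<union> {LPos h}) \<union> D) \<in> cS3b P' q"
      unfolding cS3b_def using r h D by blast
    then have "rsat X Y (H r2, Bq q r2 \<union> LNot ` Hq q r3 \<union> lnn ` (Bq q r3 \<union> {LPos h}) \<union> D)" using l by blast
    then show "xh r2" unfolding ev3b[OF D(1)] using h D p by blast
  qed
next
  assume rr: "\<forall>r2\<in>R2. \<forall>r3\<in>R3. yh r2 \<and> (yb r3 \<and> \<not> yh r3) \<and> SS yb yh ((R0 \<union> R2) - {r2}) \<and> xb r2 \<longrightarrow> xh r2"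
  show "\<forall>\<rho>\<in>cS3b P' q. rsat X Y \<rho>"
  proof
    fix \<rho> assume "\<rho> \<in> cS3b P' q"
    then obtain r2 r3 h D where \<rho>: "\<rho> = (H r2, Bq q r2 \<union> LNot ` Hq q r3 \<union> lnn ` (Bq q r3 \<union> {LPos h}) \<union> D)"
      and c: "r2 \<in> R2" "r3 \<in> R3" "h \<in> H r2" "D \<in> Dq q ((R0 \<union> R2) - {r2})" unfolding cS3b_def by blast
    have ss: "SS yb yh ((R0 \<union> R2) - {r2})" if "\<forall>l\<in>D. tY Y l" using D_SS[OF c(4)] that by blast
    show "rsat X Y \<rho>" unfolding \<rho> ev3b[OF c(4)] using rr c hHY[OF c(3)] ss by blast
  qed
qed

lemma fam4: "(\<forall>\<rho>\<in>cS4 P' q. rsat X Y \<rho>) \<longleftrightarrow>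
  (\<forall>r'\<in>R1 \<union> R4. (SS yb yh (R3 \<union> R4) \<and> yb r' \<longrightarrow> yh r') \<and> (SS yb yh (R3 \<union> R4) \<and> xb r' \<longrightarrow> xh r'))"
proof
  assume l: "\<forall>\<rho>\<in>cS4 P' q. rsat X Y \<rho>"
  have key: "\<exists>D. rsat X Y (Hq q r', Bq q r' \<union> D) \<and> D \<in> Dq q (R3 \<union> R4) \<and> (\<forall>l\<in>D. tY Y l)"
    if r: "r' \<in> R1 \<union> R4" and s: "SS yb yh (R3 \<union> R4)" and y: "yb r'" for r'
  proof -
    obtain D where D: "D \<in> Dq q (R3 \<union> R4)" "\<forall>l\<in>D. tY Y l" using D_obt[OF s] by blast
    have "D \<inter> lnot ` Bq q r' = {}" using Dq_disj[OF D] y unfolding YB_def by blast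
    then have "(Hq q r', Bq q r' \<union> D) \<in> cS4 P' q" unfolding cS4_def using r D by blast
    then have "rsat X Y (Hq q r', Bq q r' \<union> D)" using l by blast
    then show ?thesis using D by blast
  qed
  show "\<forall>r'\<in>R1 \<union> R4. (SS yb yh (R3 \<union> R4) \<and> yb r' \<longrightarrow> yh r') \<and> (SS yb yh (R3 \<union> R4) \<and> xb r' \<longrightarrow> xh r')"
  proof (intro ballI conjI impI)
    fix r' assume r: "r' \<in> R1 \<union> R4"
    { assume p: "SS yb yh (R3 \<union> R4) \<and> yb r'"
      then obtain D where "rsat X Y (Hq q r', Bq q r' \<union> D)" "D \<in> Dq q (R3 \<union> R4)" "\<forall>l\<in>D. tY Y l"
        using key[OF r] by blast
      then show "yh r'" using ev4 p by blast }
    { assume p: "SS yb yh (R3 \<union> R4) \<and> xb r'"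
      then have "yb r'" using xb_yb by blast
      then obtain D where "rsat X Y (Hq q r', Bq q r' \<union> D)" "D \<in> Dq q (R3 \<union> R4)" "\<forall>l\<in>D. tY Y l"
        using key[OF r] p by blast
      then show "xh r'" using ev4 p by blast }
  qed
next
  assume rr: "\<forall>r'\<in>R1 \<union> R4. (SS yb yh (R3 \<union> R4) \<and> yb r' \<longrightarrow> yh r') \<and> (SS yb yh (R3 \<union> R4) \<and> xb r' \<longrightarrow> xh r')"
  show "\<forall>\<rho>\<in>cS4 P' q. rsat X Y \<rho>"
  proof
    fix \<rho> assume "\<rho> \<in> cS4 P' q"
    then obtain r' D where \<rho>: "\<rho> = (Hq q r', Bq q r' \<union> D)"
      and c: "r' \<in> R1 \<union> R4" "D \<in> Dq q (R3 \<union> R4)" unfolding cS4_def by blast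
    have ss: "SS yb yh (R3 \<union> R4)" if "\<forall>l\<in>D. tY Y l" using D_SS[OF c(2)] that by blast
    show "rsat X Y \<rho>" unfolding \<rho> ev4[OF c(2)] using rr c ss by blast
  qed
qed

lemma fam5: "(\<forall>\<rho>\<in>cS5 P' q. rsat X Y \<rho>) \<longleftrightarrow>
  (\<forall>r'\<in>R1 \<union> R4. \<forall>r3\<in>R3. \<forall>r\<in>R0 \<union> R2.
   ((yb r \<and> \<not> yh r) \<and> (yb r3 \<and> \<not> yh r3) \<and> SS yb yh R4 \<and> yb r' \<longrightarrow> yh r') \<and>
   ((yb r \<and> \<not> yh r) \<and> (yb r3 \<and> \<not> yh r3) \<and> SS yb yh R4 \<and> xb r' \<longrightarrow> xh r'))"
proof
  assume l: "\<forall>\<rho>\<in>cS5 P' q. rsat X Y \<rho>"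
  have key: "\<exists>D. rsat X Y (Hq q r', Bq q r' \<union> LNot ` (H r \<union> Hq q r3) \<union> lnn ` (Bq q r \<union> Bq q r3) \<union> D)
      \<and> D \<in> Dq q R4 \<and> (\<forall>l\<in>D. tY Y l)"
    if r: "r' \<in> R1 \<union> R4" "r3 \<in> R3" "r \<in> R0 \<union> R2" and s: "SS yb yh R4" and y: "yb r'" for r' r3 r
  proof -
    obtain D where D: "D \<in> Dq q R4" "\<forall>l\<in>D. tY Y l" using D_obt[OF s] by blast
    have "D \<inter> lnot ` Bq q r' = {}" using Dq_disj[OF D] y unfolding YB_def by blast
    then have "(Hq q r', Bq q r' \<union> LNot ` (H r \<union> Hq q r3) \<union> lnn ` (Bq q r \<union> Bq q r3) \<union> D) \<in> cS5 P' q"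
      unfolding cS5_def using r D by blast
    then have "rsat X Y (Hq q r', Bq q r' \<union> LNot ` (H r \<union> Hq q r3) \<union> lnn ` (Bq q r \<union> Bq q r3) \<union> D)" using l by blast
    then show ?thesis using D by blast
  qed
  show "\<forall>r'\<in>R1 \<union> R4. \<forall>r3\<in>R3. \<forall>r\<in>R0 \<union> R2.
   ((yb r \<and> \<not> yh r) \<and> (yb r3 \<and> \<not> yh r3) \<and> SS yb yh R4 \<and> yb r' \<longrightarrow> yh r') \<and>
   ((yb r \<and> \<not> yh r) \<and> (yb r3 \<and> \<not> yh r3) \<and> SS yb yh R4 \<and> xb r' \<longrightarrow> xh r')"
  proof (intro ballI conjI impI)
    fix r' r3 r assume r: "r' \<in> R1 \<union> R4" "r3 \<in> R3" "r \<in> R0 \<union> R2"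
    { assume p: "(yb r \<and> \<not> yh r) \<and> (yb r3 \<and> \<not> yh r3) \<and> SS yb yh R4 \<and> yb r'"
      then have s: "SS yb yh R4" and y: "yb r'" by blast+
      obtain D where "rsat X Y (Hq q r', Bq q r' \<union> LNot ` (H r \<union> Hq q r3) \<union> lnn ` (Bq q r \<union> Bq q r3) \<union> D)"
        "D \<in> Dq q R4" "\<forall>l\<in>D. tY Y l"
        using key[OF r s y] by blast
      then show "yh r'" using ev5 p by blast }
    { assume p: "(yb r \<and> \<not> yh r) \<and> (yb r3 \<and> \<not> yh r3) \<and> SS yb yh R4 \<and> xb r'"
      then have s: "SS yb yh R4" and y: "yb r'" using xb_yb by blast+
      obtain D where "rsat X Y (Hq q r', Bq q r' \<union> LNot ` (H r \<union> Hq q r3) \<union> lnn ` (Bq q r \<union> Bq q r3) \<union> D)"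
        "D \<in> Dq q R4" "\<forall>l\<in>D. tY Y l"
        using key[OF r s y] by blast
      then show "xh r'" using ev5 p by blast }
  qed
next
  assume rr: "\<forall>r'\<in>R1 \<union> R4. \<forall>r3\<in>R3. \<forall>r\<in>R0 \<union> R2.
   ((yb r \<and> \<not> yh r) \<and> (yb r3 \<and> \<not> yh r3) \<and> SS yb yh R4 \<and> yb r' \<longrightarrow> yh r') \<and>
   ((yb r \<and> \<not> yh r) \<and> (yb r3 \<and> \<not> yh r3) \<and> SS yb yh R4 \<and> xb r' \<longrightarrow> xh r')"
  show "\<forall>\<rho>\<in>cS5 P' q. rsat X Y \<rho>"
  proof
    fix \<rho> assume "\<rho> \<in> cS5 P' q"
    then obtain r' r3 r D where \<rho>: "\<rho> = (Hq q r', Bq q r' \<union> LNot ` (H r \<union> Hq q r3) \<union> lnn ` (Bq q r \<union> Bq q r3) \<union> D)"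
      and c: "r' \<in> R1 \<union> R4" "r3 \<in> R3" "r \<in> R0 \<union> R2" "D \<in> Dq q R4" unfolding cS5_def by blast
    have ss: "SS yb yh R4" if "\<forall>l\<in>D. tY Y l" using D_SS[OF c(4)] that by blast
    show "rsat X Y \<rho>" unfolding \<rho> ev5[OF c(4)] using rr c ss by blast
  qed
qed

lemma hHqY: "h \<in> Hq q r \<Longrightarrow> h \<in> Z \<Longrightarrow> HH q Z r" unfolding HH_def by blast

lemma fam6: "(\<forall>\<rho>\<in>cS6 P' q. rsat X Y \<rho>) \<longleftrightarrow>
  (\<forall>r'\<in>R1 \<union> R4. \<forall>r3\<in>R3. yh r' \<and> (yb r3 \<and> \<not> yh r3) \<and> SS yb yh ((R1 \<union> R4) - {r'}) \<and> xb r' \<longrightarrow> xh r')"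
proof
  assume l: "\<forall>\<rho>\<in>cS6 P' q. rsat X Y \<rho>"
  show "\<forall>r'\<in>R1 \<union> R4. \<forall>r3\<in>R3. yh r' \<and> (yb r3 \<and> \<not> yh r3) \<and> SS yb yh ((R1 \<union> R4) - {r'}) \<and> xb r' \<longrightarrow> xh r'"
  proof (intro ballI impI)
    fix r' r3 assume r: "r' \<in> R1 \<union> R4" "r3 \<in> R3" and p: "yh r' \<and> (yb r3 \<and> \<not> yh r3) \<and> SS yb yh ((R1 \<union> R4) - {r'}) \<and> xb r'"
    have "yh r'" using p by blast
    then obtain h where h: "h \<in> Hq q r'" "h \<in> Y" using yh_obt' by blast
    have "SS yb yh ((R1 \<union> R4) - {r'})" using p by blast
    then obtain D where D: "D \<in> Dq q ((R1 \<union> R4) - {r'})" "\<forall>l\<in>D. tY Y l" using D_obt by blast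
    have "(Hq q r', Bq q r' \<union> LNot ` Hq q r3 \<union> lnn ` (Bq q r3 \<union> {LPos h}) \<union> D) \<in> cS6 P' q"
      unfolding cS6_def using r h D by blast
    then have "rsat X Y (Hq q r', Bq q r' \<union> LNot ` Hq q r3 \<union> lnn ` (Bq q r3 \<union> {LPos h}) \<union> D)" using l by blast
    then show "xh r'" unfolding ev6[OF D(1)] using h D p by blast
  qed
next
  assume rr: "\<forall>r'\<in>R1 \<union> R4. \<forall>r3\<in>R3. yh r' \<and> (yb r3 \<and> \<not> yh r3) \<and> SS yb yh ((R1 \<union> R4) - {r'}) \<and> xb r' \<longrightarrow> xh r'"
  show "\<forall>\<rho>\<in>cS6 P' q. rsat X Y \<rho>"
  proof
    fix \<rho> assume "\<rho> \<in> cS6 P' q"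
    then obtain r' r3 h D where \<rho>: "\<rho> = (Hq q r', Bq q r' \<union> LNot ` Hq q r3 \<union> lnn ` (Bq q r3 \<union> {LPos h}) \<union> D)"
      and c: "r' \<in> R1 \<union> R4" "r3 \<in> R3" "h \<in> Hq q r'" "D \<in> Dq q ((R1 \<union> R4) - {r'})" unfolding cS6_def by blast
    have ss: "SS yb yh ((R1 \<union> R4) - {r'})" if "\<forall>l\<in>D. tY Y l" using D_SS[OF c(4)] that by blast
    have hy: "h \<in> Y \<Longrightarrow> yh r'" using hHqY[OF c(3)] by blast
    show "rsat X Y \<rho>" unfolding \<rho> ev6[OF c(4)] using rr c hy ss by blast
  qed
qed

lemma fam7: "(\<forall>\<rho>\<in>cS7 P' q. rsat X Y \<rho>) \<longleftrightarrow>
  (\<forall>r0\<in>R0. \<forall>r3\<in>R3. \<forall>r3'\<in>R3. r3 \<noteq> r3' \<longrightarrow>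
   (yh r0 \<and> (yb r3' \<and> \<not> yh r3') \<and> SS yb yh ((R0 \<union> R2) - {r0}) \<and> xb r0 \<and> xb r3 \<longrightarrow> xh r0 \<or> xh r3))"
proof
  assume l: "\<forall>\<rho>\<in>cS7 P' q. rsat X Y \<rho>"
  show "\<forall>r0\<in>R0. \<forall>r3\<in>R3. \<forall>r3'\<in>R3. r3 \<noteq> r3' \<longrightarrow>
   (yh r0 \<and> (yb r3' \<and> \<not> yh r3') \<and> SS yb yh ((R0 \<union> R2) - {r0}) \<and> xb r0 \<and> xb r3 \<longrightarrow> xh r0 \<or> xh r3)"
  proof (intro ballI impI)
    fix r0 r3 r3' assume r: "r0 \<in> R0" "r3 \<in> R3" "r3' \<in> R3" "r3 \<noteq> r3'"
      and p: "yh r0 \<and> (yb r3' \<and> \<not> yh r3') \<and> SS yb yh ((R0 \<union> R2) - {r0}) \<and> xb r0 \<and> xb r3"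
    have "yh r0" using p by blast
    then obtain h where h: "h \<in> H r0" "h \<in> Y" using yh_obt by blast
    have "SS yb yh ((R0 \<union> R2) - {r0})" using p by blast
    then obtain D where D: "D \<in> Dq q ((R0 \<union> R2) - {r0})" "\<forall>l\<in>D. tY Y l" using D_obt by blast
    have "(H r0 \<union> Hq q r3, Bq q r0 \<union> Bq q r3 \<union> LNot ` Hq q r3' \<union> lnn ` (Bq q r3' \<union> {LPos h}) \<union> D) \<in> cS7 P' q"
      unfolding cS7_def using r h D by blast
    then have "rsat X Y (H r0 \<union> Hq q r3, Bq q r0 \<union> Bq q r3 \<union> LNot ` Hq q r3' \<union> lnn ` (Bq q r3' \<union> {LPos h}) \<union> D)" using l by blast
    then show "xh r0 \<or> xh r3" unfolding ev7[OF D(1)] using h D p by blast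
  qed
next
  assume rr: "\<forall>r0\<in>R0. \<forall>r3\<in>R3. \<forall>r3'\<in>R3. r3 \<noteq> r3' \<longrightarrow>
   (yh r0 \<and> (yb r3' \<and> \<not> yh r3') \<and> SS yb yh ((R0 \<union> R2) - {r0}) \<and> xb r0 \<and> xb r3 \<longrightarrow> xh r0 \<or> xh r3)"
  show "\<forall>\<rho>\<in>cS7 P' q. rsat X Y \<rho>"
  proof
    fix \<rho> assume "\<rho> \<in> cS7 P' q"
    then obtain r0 r3 r3' D h where \<rho>: "\<rho> = (H r0 \<union> Hq q r3, Bq q r0 \<union> Bq q r3 \<union> LNot ` Hq q r3' \<union> lnn ` (Bq q r3' \<union> {LPos h}) \<union> D)"
      and c: "r0 \<in> R0" "r3 \<in> R3" "r3' \<in> R3" "r3 \<noteq> r3'" "D \<in> Dq q ((R0 \<union> R2) - {r0})" "h \<in> H r0"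
      unfolding cS7_def by blast
    have ss: "SS yb yh ((R0 \<union> R2) - {r0})" if "\<forall>l\<in>D. tY Y l" using D_SS[OF c(5)] that by blast
    have hy: "h \<in> Y \<Longrightarrow> yh r0" using hHY[OF c(6)] by blast
    show "rsat X Y \<rho>" unfolding \<rho> ev7[OF c(5)] using rr c hy ss by blast
  qed
qed

end


context fc begin

lemma hxy: "xh r \<Longrightarrow> yh r" unfolding HH_def using XY by blast

lemma cPP_ball: "(\<forall>\<rho>\<in>cPP P' q. rsat X Y \<rho>) \<longleftrightarrow> (\<forall>\<rho>\<in>R. rsat X Y \<rho>) \<and>
  (\<forall>\<rho>\<in>cS1a P' q. rsat X Y \<rho>) \<and> (\<forall>\<rho>\<in>cS2a P' q. rsat X Y \<rho>) \<and> (\<forall>\<rho>\<in>cS3a P' q. rsat X Y \<rho>) \<and>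
  (\<forall>\<rho>\<in>cS1b P' q. rsat X Y \<rho>) \<and> (\<forall>\<rho>\<in>cS2b P' q. rsat X Y \<rho>) \<and> (\<forall>\<rho>\<in>cS3b P' q. rsat X Y \<rho>) \<and>
  (\<forall>\<rho>\<in>cS4 P' q. rsat X Y \<rho>) \<and> (\<forall>\<rho>\<in>cS5 P' q. rsat X Y \<rho>) \<and> (\<forall>\<rho>\<in>cS6 P' q. rsat X Y \<rho>) \<and>
  (\<forall>\<rho>\<in>cS7 P' q. rsat X Y \<rho>)"
  by (simp only: cPP_def ball_Un conj_assoc)

lemma main_fc: "ht_model X Y (cPP P' q) \<longleftrightarrow>
 (ht_model Y Y P' \<or> (ht_model (insert q Y) (insert q Y) P' \<and> \<not> ht_model Y (insert q Y) P')) \<and>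
 (ht_model Y Y P' \<longrightarrow> ht_model X Y P') \<and>
 (ht_model (insert q Y) (insert q Y) P' \<and> \<not> ht_model Y (insert q Y) P' \<longrightarrow>
    ht_model X (insert q Y) P' \<or> ht_model (insert q X) (insert q Y) P')" (is "_ \<longleftrightarrow> ?RHS")
proof -
  interpret c: core yb xb yh xh R R0 R1 R2 R3 R4
    by unfold_locales (use xb_yb hxy in blast)+
  have "ht_model X Y (cPP P' q) \<longleftrightarrow> (\<forall>\<rho>\<in>cPP P' q. rsat X Y \<rho>)" unfolding ht_model_iff using XY by blast
  also have "\<dots> \<longleftrightarrow> c.FR \<and> c.F1a \<and> c.F2a \<and> c.F3a \<and> c.F1b \<and> c.F2b \<and> c.F3b \<and> c.F4 \<and> c.F5 \<and> c.F6 \<and> c.F7"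
    unfolding cPP_ball famR fam1a fam2a fam3a fam1b fam2b fam3b fam4 fam5 fam6 fam7
      c.FR_def c.F1a_def c.F2a_def c.F3a_def c.F1b_def c.F2b_def c.F3b_def c.F4_def c.F5_def c.F6_def c.F7_def c.cY_def
    by (rule refl)
  also have "\<dots> \<longleftrightarrow> c.Phi" using c.sound c.complete by blast
  also have "\<dots> \<longleftrightarrow> ?RHS"
    unfolding c.Phi_def c.T0_def c.T1_def c.NN_def c.M00_def c.M01_def c.M11_def
      htA[OF nf qY XY] htB[OF nf qY XY] htC[OF nf qY XY] htD[OF nf qY XY] htE[OF nf qY XY] htF[OF nf qY XY]
    by (rule refl)
  finally show ?thesis .
qed

end


definition good :: "'a set \<Rightarrow> 'a \<Rightarrow> 'a rule \<Rightarrow> bool" where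
  "good At q \<rho> = (H \<rho> \<subseteq> At - {q} \<and> (\<forall>l\<in>B \<rho>. latom l \<in> At - {q}))"

lemma good_pair: "good At q (Hd, Bd) \<longleftrightarrow> Hd \<subseteq> At - {q} \<and> (\<forall>l\<in>Bd. latom l \<in> At - {q})"
  unfolding good_def H_def B_def by simp

lemma latom_lnot[simp]: "latom (lnot l) = latom l" by (cases l) auto
lemma latom_lnn[simp]: "latom (lnn l) = latom l" by (cases l) auto

lemma good_qfree: "good At q \<rho> \<Longrightarrow> q \<notin> atoms_rule \<rho>"
  unfolding good_def atoms_q by (metis Diff_iff insertI1 latom_simps subset_iff)

lemma good_fin: "finite At \<Longrightarrow> finite {\<rho>. good At q \<rho>}"
proof -
  assume f: "finite At"
  have "{\<rho>. good At q \<rho>} \<subseteq> Pow At \<times> Pow (LPos ` At \<union> LNot ` At \<union> LNotNot ` At)"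
  proof
    fix \<rho> assume "\<rho> \<in> {\<rho>. good At q \<rho>}"
    then have g: "H \<rho> \<subseteq> At" "\<forall>l\<in>B \<rho>. latom l \<in> At" unfolding good_def by auto
    have "B \<rho> \<subseteq> LPos ` At \<union> LNot ` At \<union> LNotNot ` At"
    proof
      fix l assume "l \<in> B \<rho>"
      then have "latom l \<in> At" using g by blast
      then show "l \<in> LPos ` At \<union> LNot ` At \<union> LNotNot ` At" by (cases l) auto
    qed
    then show "\<rho> \<in> Pow At \<times> Pow (LPos ` At \<union> LNot ` At \<union> LNotNot ` At)"
      using g(1) unfolding H_def B_def by (cases \<rho>) auto
  qed
  moreover have "finite (Pow At \<times> Pow (LPos ` At \<union> LNot ` At \<union> LNotNot ` At))" using f by simp
  ultimately show ?thesis using finite_subset by blast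
qed

locale gc =
  fixes P' :: "'a rule set" and q :: 'a and At :: "'a set"
  assumes nf: "\<forall>r\<in>P'. nfl r" and base: "\<forall>r\<in>P'. H r \<subseteq> At \<and> (\<forall>l\<in>B r. latom l \<in> At)"
begin

lemma gBq: "r \<in> P' \<Longrightarrow> l \<in> Bq q r \<Longrightarrow> latom l \<in> At - {q}"
proof -
  assume r: "r \<in> P'" and l: "l \<in> Bq q r"
  have "l \<in> B r" using l unfolding Bq_def by blast
  then have "latom l \<in> At" using base r by blast
  moreover have "latom l \<noteq> q" using Bq_latom[OF l] .
  ultimately show ?thesis by blast
qed
lemma gHq: "r \<in> P' \<Longrightarrow> h \<in> Hq q r \<Longrightarrow> h \<in> At - {q}"
proof -
  assume r: "r \<in> P'" and h: "h \<in> Hq q r"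
  have "h \<in> H r" "h \<noteq> q" using h unfolding Hq_def by auto
  moreover have "H r \<subseteq> At" using base r by blast
  ultimately show ?thesis by blast
qed
lemma gH0: "r \<in> cR0 P' q \<Longrightarrow> h \<in> H r \<Longrightarrow> h \<in> At - {q}"
proof -
  assume r: "r \<in> cR0 P' q" and h: "h \<in> H r"
  then have "r \<in> P'" "LPos q \<in> B r" unfolding cR0_def by auto
  then have "q \<notin> H r" using nfl_facts(1)[of r q] nf by blast
  moreover have "H r \<subseteq> At" using base \<open>r \<in> P'\<close> by blast
  ultimately show ?thesis using h by blast
qed
lemma gH2: "r \<in> cR2 P' q \<Longrightarrow> h \<in> H r \<Longrightarrow> h \<in> At - {q}"
proof -
  assume r: "r \<in> cR2 P' q" and h: "h \<in> H r"
  then have "r \<in> P'" "q \<notin> H r" unfolding cR2_def by auto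
  moreover have "H r \<subseteq> At" using base \<open>r \<in> P'\<close> by blast
  ultimately show ?thesis using h by blast
qed
lemma gH02: "r \<in> cR0 P' q \<union> cR2 P' q \<Longrightarrow> h \<in> H r \<Longrightarrow> h \<in> At - {q}"
proof -
  assume "r \<in> cR0 P' q \<union> cR2 P' q" "h \<in> H r"
  then show ?thesis
  proof (cases "r \<in> cR0 P' q")
    case True then show ?thesis using gH0 \<open>h \<in> H r\<close> by blast
  next
    case False then have "r \<in> cR2 P' q" using \<open>r \<in> cR0 P' q \<union> cR2 P' q\<close> by blast
    then show ?thesis using gH2 \<open>h \<in> H r\<close> by blast
  qed
qed
lemma gB4: "r \<in> cR4 P' q \<Longrightarrow> l \<in> B r \<Longrightarrow> latom l \<in> At - {q}"
proof -
  assume r: "r \<in> cR4 P' q" and l: "l \<in> B r"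
  then have n: "r \<in> P'" "nfl r" "q \<in> H r" "LNotNot q \<notin> B r" using nf unfolding cR4_def by auto
  have "LPos q \<notin> B r" "LNot q \<notin> B r" using nfl_facts[OF n(2), of q] n(3) by auto
  then have "l \<in> Bq q r" using n(4) l unfolding Bq_def by auto
  then show ?thesis using gBq n(1) by blast
qed
lemma gD: "Q \<subseteq> P' \<Longrightarrow> D \<in> Dq q Q \<Longrightarrow> l \<in> D \<Longrightarrow> latom l \<in> At - {q}"
proof -
  assume Q: "Q \<subseteq> P'" and D: "D \<in> Dq q Q" and l: "l \<in> D"
  from D obtain Q1 Q2 :: "'a rule set" and l1 l2 where d: "D = lnot ` (l1 ` Q1) \<union> LNotNot ` (l2 ` Q2)"
    "Q1 \<union> Q2 = Q" "\<forall>r\<in>Q1. l1 r \<in> Bq q r" "\<forall>r\<in>Q2. l2 r \<in> Hq q r" unfolding Dq_mem by blast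
  from l d(1) have "l \<in> lnot ` (l1 ` Q1) \<or> l \<in> LNotNot ` (l2 ` Q2)" by simp
  then show ?thesis
  proof
    assume "l \<in> lnot ` (l1 ` Q1)"
    then obtain r where r: "r \<in> Q1" "l = lnot (l1 r)" by blast
    then have "r \<in> P'" using Q d(2) by blast
    then show ?thesis using gBq d(3) r by simp
  next
    assume "l \<in> LNotNot ` (l2 ` Q2)"
    then obtain r where r: "r \<in> Q2" "l = LNotNot (l2 r)" by blast
    then have "r \<in> P'" using Q d(2) by blast
    then show ?thesis using gHq d(4) r by simp
  qed
qed

lemma subs: "cR P' q \<subseteq> P'" "cR0 P' q \<subseteq> P'" "cR1 P' q \<subseteq> P'" "cR2 P' q \<subseteq> P'" "cR3 P' q \<subseteq> P'" "cR4 P' q \<subseteq> P'"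
  unfolding cR_def cR0_def cR1_def cR2_def cR3_def cR4_def by auto

end


context gc begin

lemma inP: "r \<in> cR P' q \<Longrightarrow> r \<in> P'" "r \<in> cR0 P' q \<Longrightarrow> r \<in> P'" "r \<in> cR1 P' q \<Longrightarrow> r \<in> P'"
  "r \<in> cR2 P' q \<Longrightarrow> r \<in> P'" "r \<in> cR3 P' q \<Longrightarrow> r \<in> P'" "r \<in> cR4 P' q \<Longrightarrow> r \<in> P'"
  using subs by blast+

lemma gBq': "r \<in> P' \<Longrightarrow> l \<in> Bq q r \<Longrightarrow> latom l \<in> At \<and> latom l \<noteq> q" using gBq by blast
lemma gHq': "r \<in> P' \<Longrightarrow> h \<in> Hq q r \<Longrightarrow> h \<in> At \<and> h \<noteq> q" using gHq by blast
lemma gH02': "r \<in> cR0 P' q \<union> cR2 P' q \<Longrightarrow> h \<in> H r \<Longrightarrow> h \<in> At \<and> h \<noteq> q" using gH02 by blast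
lemma gH0': "r \<in> cR0 P' q \<Longrightarrow> h \<in> H r \<Longrightarrow> h \<in> At \<and> h \<noteq> q" using gH0 by blast
lemma gH2': "r \<in> cR2 P' q \<Longrightarrow> h \<in> H r \<Longrightarrow> h \<in> At \<and> h \<noteq> q" using gH2 by blast
lemma gB4': "r \<in> cR4 P' q \<Longrightarrow> l \<in> B r \<Longrightarrow> latom l \<in> At \<and> latom l \<noteq> q" using gB4 by blast
lemma gD': "Q \<subseteq> P' \<Longrightarrow> D \<in> Dq q Q \<Longrightarrow> l \<in> D \<Longrightarrow> latom l \<in> At \<and> latom l \<noteq> q" using gD by blast

lemma gR: "\<forall>\<rho>\<in>cR P' q. good At q \<rho>"
proof
  fix r assume r: "r \<in> cR P' q"
  then have rp: "r \<in> P'" and qa: "q \<notin> atoms_rule r" unfolding cR_def by auto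
  have "H r \<subseteq> At - {q}" using base rp qa unfolding atoms_rule_def by blast
  moreover have "\<forall>l\<in>B r. latom l \<in> At - {q}"
  proof
    fix l assume "l \<in> B r"
    then have "latom l \<in> At" "latom l \<in> atoms_rule r" using base rp latom_in by blast+
    then show "latom l \<in> At - {q}" using qa by blast
  qed
  ultimately show "good At q r" unfolding good_def by blast
qed

definition "bg S = (\<forall>l\<in>S. latom l \<in> At - {q})"

lemma bg_Un[simp]: "bg (A \<union> C) = (bg A \<and> bg C)" unfolding bg_def by blast
lemma bg_Bq[simp]: "r \<in> P' \<Longrightarrow> bg (Bq q r)" unfolding bg_def using gBq by blast
lemma bg_lnn[simp]: "bg (lnn ` S) = bg S" unfolding bg_def by simp
lemma bg_LNot[simp]: "bg (LNot ` A) = (A \<subseteq> At - {q})" unfolding bg_def by auto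
lemma bg_insert[simp]: "bg (insert l S) = (latom l \<in> At - {q} \<and> bg S)" unfolding bg_def by simp
lemma bg_empty[simp]: "bg {}" unfolding bg_def by simp
lemma bg_NN: "bg {LNotNot h} = (h \<in> At - {q})" unfolding bg_def by simp
lemma bg_P: "bg {LPos h} = (h \<in> At - {q})" unfolding bg_def by simp
lemma bg_D: "Q \<subseteq> P' \<Longrightarrow> D \<in> Dq q Q \<Longrightarrow> bg D" unfolding bg_def using gD by blast
lemma bg_B4[simp]: "r \<in> cR4 P' q \<Longrightarrow> bg (B r)" unfolding bg_def using gB4 by blast
lemma Hq_sub[simp]: "r \<in> P' \<Longrightarrow> Hq q r \<subseteq> At - {q}" using gHq by blast
lemma H0_sub[simp]: "r \<in> cR0 P' q \<Longrightarrow> H r \<subseteq> At - {q}" using gH0 by blast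
lemma H2_sub[simp]: "r \<in> cR2 P' q \<Longrightarrow> H r \<subseteq> At - {q}" using gH2 by blast
lemma H02_sub: "r \<in> cR0 P' q \<union> cR2 P' q \<Longrightarrow> H r \<subseteq> At - {q}" using gH02 by blast
lemma inP'[simp]: "r \<in> cR P' q \<Longrightarrow> r \<in> P'" "r \<in> cR0 P' q \<Longrightarrow> r \<in> P'" "r \<in> cR1 P' q \<Longrightarrow> r \<in> P'"
  "r \<in> cR2 P' q \<Longrightarrow> r \<in> P'" "r \<in> cR3 P' q \<Longrightarrow> r \<in> P'" "r \<in> cR4 P' q \<Longrightarrow> r \<in> P'"
  using inP by blast+
lemma inP14: "r \<in> cR1 P' q \<union> cR4 P' q \<Longrightarrow> r \<in> P'" using inP by blast
lemma inP02: "r \<in> cR0 P' q \<union> cR2 P' q \<Longrightarrow> r \<in> P'" using inP by blast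
lemma sub02: "cR0 P' q \<union> cR2 P' q - {r} \<subseteq> P'" using subs by blast
lemma sub14: "cR1 P' q \<union> cR4 P' q - {r} \<subseteq> P'" using subs by blast
lemma sub34: "cR3 P' q \<union> cR4 P' q \<subseteq> P'" using subs by blast

lemma good_bg: "good At q (Hd, Bd) = (Hd \<subseteq> At - {q} \<and> bg Bd)" unfolding good_pair bg_def ..

lemma g1a: "\<forall>\<rho>\<in>cS1a P' q. good At q \<rho>"
  unfolding cS1a_def ball_setof2 good_bg by simp

lemma g2a: "\<forall>\<rho>\<in>cS2a P' q. good At q \<rho>"
  unfolding cS2a_def ball_setof3 good_bg using inP14 by simp

lemma g3a: "\<forall>\<rho>\<in>cS3a P' q. good At q \<rho>"
  unfolding cS3a_def ball_setof4 good_bg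
proof (intro allI impI)
  fix r0 r3 h D assume c: "r0 \<in> cR0 P' q \<and> r3 \<in> cR3 P' q \<and> h \<in> H r0 \<and> D \<in> Dq q (cR0 P' q \<union> cR2 P' q - {r0})"
  have "bg D" using bg_D[OF sub02] c by blast
  moreover have "h \<in> At - {q}" using c H0_sub by blast
  ultimately show "H r0 \<subseteq> At - {q} \<and> bg (Bq q r0 \<union> {LNotNot h} \<union> D \<union> Bq q r3 \<union> LNot ` Hq q r3)"
    using c by simp
qed

lemma g1b: "\<forall>\<rho>\<in>cS1b P' q. good At q \<rho>"
  unfolding cS1b_def ball_setof2 good_bg by simp

lemma g2b: "\<forall>\<rho>\<in>cS2b P' q. good At q \<rho>"
  unfolding cS2b_def ball_setof3 good_bg using inP14 by simp

lemma g3b: "\<forall>\<rho>\<in>cS3b P' q. good At q \<rho>"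
  unfolding cS3b_def ball_setof4 good_bg
proof (intro allI impI)
  fix r2 r3 h D assume c: "r2 \<in> cR2 P' q \<and> r3 \<in> cR3 P' q \<and> h \<in> H r2 \<and> D \<in> Dq q (cR0 P' q \<union> cR2 P' q - {r2})"
  have "bg D" using bg_D[OF sub02] c by blast
  moreover have "h \<in> At - {q}" using c H2_sub by blast
  ultimately show "H r2 \<subseteq> At - {q} \<and> bg (Bq q r2 \<union> LNot ` Hq q r3 \<union> lnn ` (Bq q r3 \<union> {LPos h}) \<union> D)"
    using c by simp
qed

lemma g4: "\<forall>\<rho>\<in>cS4 P' q. good At q \<rho>"
  unfolding cS4_def ball_setof2 good_bg
proof (intro allI impI)
  fix r' D assume c: "r' \<in> cR1 P' q \<union> cR4 P' q \<and> D \<in> Dq q (cR3 P' q \<union> cR4 P' q) \<and> D \<inter> lnot ` Bq q r' = {}"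
  have "bg D" using bg_D[OF sub34] c by blast
  moreover have "r' \<in> P'" using c inP14 by blast
  ultimately show "Hq q r' \<subseteq> At - {q} \<and> bg (Bq q r' \<union> D)" by simp
qed

lemma g5: "\<forall>\<rho>\<in>cS5 P' q. good At q \<rho>"
  unfolding cS5_def ball_setof4 good_bg
proof (intro allI impI)
  fix r' r3 r D assume c: "r' \<in> cR1 P' q \<union> cR4 P' q \<and> r3 \<in> cR3 P' q \<and> r \<in> cR0 P' q \<union> cR2 P' q \<and> D \<in> Dq q (cR4 P' q)
                 \<and> D \<inter> lnot ` Bq q r' = {}"
  have "bg D" using bg_D[OF subs(6)] c by blast
  moreover have "r' \<in> P'" "r \<in> P'" using c inP14 inP02 by blast+
  moreover have "H r \<subseteq> At - {q}" using c H02_sub by blast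
  ultimately show "Hq q r' \<subseteq> At - {q} \<and> bg (Bq q r' \<union> LNot ` (H r \<union> Hq q r3) \<union> lnn ` (Bq q r \<union> Bq q r3) \<union> D)"
    using c by simp
qed

lemma g6: "\<forall>\<rho>\<in>cS6 P' q. good At q \<rho>"
  unfolding cS6_def ball_setof4 good_bg
proof (intro allI impI)
  fix r' r3 h D assume c: "r' \<in> cR1 P' q \<union> cR4 P' q \<and> r3 \<in> cR3 P' q \<and> h \<in> Hq q r'
                 \<and> D \<in> Dq q (cR1 P' q \<union> cR4 P' q - {r'})"
  have "bg D" using bg_D[OF sub14] c by blast
  moreover have "r' \<in> P'" using c inP14 by blast
  moreover have "h \<in> At - {q}" using c gHq \<open>r' \<in> P'\<close> by blast
  ultimately show "Hq q r' \<subseteq> At - {q} \<and> bg (Bq q r' \<union> LNot ` Hq q r3 \<union> lnn ` (Bq q r3 \<union> {LPos h}) \<union> D)"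
    using c by simp
qed

lemma g7: "\<forall>\<rho>\<in>cS7 P' q. good At q \<rho>"
  unfolding cS7_def ball_setof5 good_bg
proof (intro allI impI)
  fix r0 r3 r3' D h assume c: "r0 \<in> cR0 P' q \<and> r3 \<in> cR3 P' q \<and> r3' \<in> cR3 P' q \<and> r3 \<noteq> r3'
                 \<and> D \<in> Dq q (cR0 P' q \<union> cR2 P' q - {r0}) \<and> h \<in> H r0"
  have "bg D" using bg_D[OF sub02] c by blast
  moreover have "h \<in> At - {q}" using c H0_sub by blast
  ultimately show "H r0 \<union> Hq q r3 \<subseteq> At - {q} \<and>
     bg (Bq q r0 \<union> Bq q r3 \<union> LNot ` Hq q r3' \<union> lnn ` (Bq q r3' \<union> {LPos h}) \<union> D)"
    using c by simp
qed

lemma good_cPP: "\<forall>\<rho>\<in>cPP P' q. good At q \<rho>"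
  unfolding cPP_def ball_Un using gR g1a g2a g3a g1b g2b g3b g4 g5 g6 g7 by blast

end


lemma base_NF: "\<forall>r\<in>NF P. H r \<subseteq> atP P \<and> (\<forall>l\<in>B r. latom l \<in> atP P)"
proof
  fix r assume "r \<in> NF P"
  then obtain r0 where r0: "r0 \<in> P" "r = nf_simp r0" unfolding NF_def Let_def by auto
  have "H r \<subseteq> H r0" "B r \<subseteq> B r0" unfolding r0(2) H_nf B_nf by auto
  moreover have "H r0 \<subseteq> atP P" using r0(1) unfolding atP_def atoms_rule_def by blast
  moreover have "\<forall>l\<in>B r0. latom l \<in> atP P" using r0(1) latom_in unfolding atP_def by blast
  ultimately show "H r \<subseteq> atP P \<and> (\<forall>l\<in>B r. latom l \<in> atP P)" by blast
qed

lemma fSP_char: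
  assumes p: "is_program P"
  shows "ht_model X Y (fSP P q) \<longleftrightarrow> X \<subseteq> Y \<and>
 (ht_model (Y - {q}) (Y - {q}) P \<or> (ht_model (insert q (Y - {q})) (insert q (Y - {q})) P \<and> \<not> ht_model (Y - {q}) (insert q (Y - {q})) P)) \<and>
 (ht_model (Y - {q}) (Y - {q}) P \<longrightarrow> ht_model (X - {q}) (Y - {q}) P) \<and>
 (ht_model (insert q (Y - {q})) (insert q (Y - {q})) P \<and> \<not> ht_model (Y - {q}) (insert q (Y - {q})) P \<longrightarrow>
    ht_model (X - {q}) (insert q (Y - {q})) P \<or> ht_model (insert q (X - {q})) (insert q (Y - {q})) P)"
proof -
  have finP: "finite P" using p unfolding is_program_def by blast
  define P' where "P' = NF P"
  have nf: "\<forall>r\<in>P'. nfl r"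
  proof
    fix r assume "r \<in> P'"
    then show "nfl r" unfolding P'_def by (rule NF_nfl)
  qed
  have base: "\<forall>r\<in>P'. H r \<subseteq> atP P \<and> (\<forall>l\<in>B r. latom l \<in> atP P)" unfolding P'_def by (rule base_NF)
  interpret g: gc P' q "atP P" using nf base by unfold_locales
  have good: "\<forall>\<rho>\<in>cPP P' q. good (atP P) q \<rho>" by (rule g.good_cPP)
  have fin: "finite (cPP P' q)"
  proof (rule finite_subset)
    show "cPP P' q \<subseteq> {\<rho>. good (atP P) q \<rho>}"
    proof
      fix \<rho> assume "\<rho> \<in> cPP P' q"
      then have "good (atP P) q \<rho>" by (rule bspec[OF good])
      then show "\<rho> \<in> {\<rho>. good (atP P) q \<rho>}" by simp
    qed
    show "finite {\<rho>. good (atP P) q \<rho>}" by (rule good_fin[OF finite_atP[OF p]])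
  qed
  have qf: "q \<notin> atoms_rule \<rho>" if "\<rho> \<in> cPP P' q" for \<rho>
    using good_qfree[OF bspec[OF good that]] .
  have atq: "atP (cPP P' q) \<subseteq> - {q}"
  proof
    fix a assume "a \<in> atP (cPP P' q)"
    then obtain \<rho> where "\<rho> \<in> cPP P' q" "a \<in> atoms_rule \<rho>" unfolding atP_def by blast
    then show "a \<in> - {q}" using qf by blast
  qed
  have e1: "ht_model X Y (fSP P q) \<longleftrightarrow> ht_model X Y (cPP P' q)"
    unfolding fSP_eq P'_def[symmetric] by (rule NF_ht[OF fin])
  have eP: "ht_model A C P' \<longleftrightarrow> ht_model A C P" for A C unfolding P'_def by (rule NF_ht[OF finP])
  show ?thesis
  proof (cases "X \<subseteq> Y")
    case False
    then show ?thesis unfolding e1 by (simp add: ht_model_iff)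
  next
    case True
    have XA: "X \<inter> - {q} = X - {q}" "Y \<inter> - {q} = Y - {q}" by blast+
    have e2: "ht_model X Y (cPP P' q) \<longleftrightarrow> ht_model (X - {q}) (Y - {q}) (cPP P' q)"
      using ht_loc[OF atq True] unfolding XA by simp
    interpret f: fc P' q "X - {q}" "Y - {q}"
      by unfold_locales (use nf True in blast)+
    show ?thesis unfolding e1 e2 f.main_fc eP using True by simp
  qed
qed

theorem proposition5:
  fixes P P' :: "'a rule set" and q :: 'a
  assumes "is_program P" and "is_program P'"
    and "strongly_equivalent P P'"
  shows "strongly_equivalent (fSP P q) (fSP P' q)"
proof (rule ht_eq_SE)
  fix X Y
  have e: "ht_model A C P \<longleftrightarrow> ht_model A C P'" for A C using SE_ht[OF assms(3,1,2)] .
  show "ht_model X Y (fSP P q) \<longleftrightarrow> ht_model X Y (fSP P' q)"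
    unfolding fSP_char[OF assms(1)] fSP_char[OF assms(2)] e ..
qed


end
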